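(* Let $0\le\lambda<n$ and $1\le p<\infty$. If $f\in V_0L^{p,\lambda}\cap V_\infty L^{p,\lambda}$ is uniformly continuous on $\mathbb{R}^n$, then $f$ can be approximated in the norm $\|\cdot\|_{p,\lambda}$ by functions from $V_0L^{p,\lambda}\cap V_\infty L^{p,\lambda}\cap C^\infty(\mathbb{R}^n)$.
   Context: $B(x,r)$ is the open ball in $\mathbb{R}^n$ with center $x$ and radius $r$. For $f\in L^1_{\mathrm{loc}}(\mathbb{R}^n)$ let $\mathfrak{M}_{p,\lambda}(f;x,r):=r^{-\lambda}\int_{B(x,r)}|f(y)|^p\,dy$. The homogeneous Morrey space $L^{p,\lambda}(\mathbb{R}^n)$ consists of $f\in L^p_{\mathrm{loc}}(\mathbb{R}^n)$ with $\|f\|_{p,\lambda}:=\sup_{x\in\mathbb{R}^n,\,r>0}\mathfrak{M}_{p,\lambda}(f;x,r)^{1/p}<\infty$. $V_0L^{p,\lambda}=\{f\in L^{p,\lambda}:\lim_{r\to0}\sup_{x}\mathfrak{M}_{p,\lambda}(f;x,r)=0\}$ and $V_\infty L^{p,\lambda}=\{f\in L^{p,\lambda}:\lim_{r\to\infty}\sup_{x}\mathfrak{M}_{p,\lambda}(f;x,r)=0\}$. *)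

theory Defs
  imports "HOL-Analysis.Analysis"
begin

text \<open>Euclidean space R^n is modelled by a type 'a :: euclidean_space with n = DIM('a).
  Integrals are Lebesgue integrals (nonnegative integrals in ennreal).\<close>

definition morrey_M :: "real \<Rightarrow> real \<Rightarrow> ('a::euclidean_space \<Rightarrow> real) \<Rightarrow> 'a \<Rightarrow> real \<Rightarrow> ennreal" where
  "morrey_M p lam f x r =
     ennreal (r powr (- lam)) * (\<integral>\<^sup>+ y \<in> ball x r. ennreal (\<bar>f y\<bar> powr p) \<partial>lebesgue)"

definition morrey_sup :: "real \<Rightarrow> real \<Rightarrow> ('a::euclidean_space \<Rightarrow> real) \<Rightarrow> ennreal" where
  "morrey_sup p lam f = (SUP xr \<in> UNIV \<times> {0<..}. morrey_M p lam f (fst xr) (snd xr))"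

text \<open>The Morrey norm ||f||_{p,lam} (meaningful for f in the Morrey space, where the sup is finite).\<close>
definition morrey_norm :: "real \<Rightarrow> real \<Rightarrow> ('a::euclidean_space \<Rightarrow> real) \<Rightarrow> real" where
  "morrey_norm p lam f = (enn2real (morrey_sup p lam f)) powr (1 / p)"

definition Lp_loc :: "real \<Rightarrow> ('a::euclidean_space \<Rightarrow> real) set" where
  "Lp_loc p = {f. f \<in> borel_measurable lebesgue \<and>
     (\<forall>K. compact K \<longrightarrow> (\<integral>\<^sup>+ y \<in> K. ennreal (\<bar>f y\<bar> powr p) \<partial>lebesgue) < \<infinity>)}"

definition morrey_space :: "real \<Rightarrow> real \<Rightarrow> ('a::euclidean_space \<Rightarrow> real) set" where
  "morrey_space p lam = {f. f \<in> Lp_loc p \<and> morrey_sup p lam f < \<infinity>}"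

definition V0_morrey :: "real \<Rightarrow> real \<Rightarrow> ('a::euclidean_space \<Rightarrow> real) set" where
  "V0_morrey p lam = {f. f \<in> morrey_space p lam \<and>
     ((\<lambda>r. SUP x. morrey_M p lam f x r) \<longlongrightarrow> 0) (at_right 0)}"

definition Vinf_morrey :: "real \<Rightarrow> real \<Rightarrow> ('a::euclidean_space \<Rightarrow> real) set" where
  "Vinf_morrey p lam = {f. f \<in> morrey_space p lam \<and>
     ((\<lambda>r. SUP x. morrey_M p lam f x r) \<longlongrightarrow> 0) at_top}"

text \<open>C^infinity(R^n): f is differentiable everywhere and all its partial derivatives
  are again C^infinity (coinductively, i.e. partial derivatives of all orders exist).\<close>
coinductive smooth :: "('a::euclidean_space \<Rightarrow> real) \<Rightarrow> bool" where
  "(\<forall>x. f differentiable (at x)) \<Longrightarrow>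
   (\<forall>b\<in>Basis. smooth (\<lambda>x. frechet_derivative f (at x) b)) \<Longrightarrow> smooth f"

end

theory Submission
  imports Defs
begin


coinductive D1 :: "(real \<Rightarrow> real) \<Rightarrow> bool" where
  "(\<forall>t. u differentiable (at t)) \<Longrightarrow> D1 (deriv u) \<Longrightarrow> D1 u"

lemma D1_coinduct':
  assumes "X u" and "\<And>h. X h \<Longrightarrow> (\<forall>t. h differentiable at t) \<and> (X (deriv h) \<or> D1 (deriv h))"
  shows "D1 u"
  by (rule D1.coinduct[of X]) (use assms in auto)

lemma D1_diff: "D1 u \<Longrightarrow> (u has_real_derivative deriv u t) (at t)"
  by (erule D1.cases) (simp add: DERIV_deriv_iff_real_differentiable)

lemma D1_deriv: "D1 u \<Longrightarrow> D1 (deriv u)"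
  by (erule D1.cases) simp

lemma D1_const: "D1 (\<lambda>t. c)"
proof -
  have "\<And>c. deriv (\<lambda>t::real. c::real) = (\<lambda>t. 0)" by (rule ext) simp
  show ?thesis
    by (rule D1_coinduct'[where X="\<lambda>u. \<exists>c. u = (\<lambda>t. c)"]) (auto simp: \<open>\<And>c. _\<close>)
qed

lemma D1_add: "D1 u \<Longrightarrow> D1 v \<Longrightarrow> D1 (\<lambda>t. u t + v t)"
proof (rule D1_coinduct'[where X="\<lambda>h. \<exists>u v. D1 u \<and> D1 v \<and> h = (\<lambda>t. u t + v t)"], blast)
  fix h assume "\<exists>u v. D1 u \<and> D1 v \<and> h = (\<lambda>t. u t + v t)"
  then obtain u v where uv: "D1 u" "D1 v" "h = (\<lambda>t. u t + v t)" by blast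
  have d: "\<And>t. (h has_real_derivative deriv u t + deriv v t) (at t)"
    unfolding uv(3) by (intro DERIV_add D1_diff uv)
  hence "deriv h = (\<lambda>t. deriv u t + deriv v t)" by (intro ext DERIV_imp_deriv)
  thus "(\<forall>t. h differentiable at t) \<and> ((\<exists>u v. D1 u \<and> D1 v \<and> deriv h = (\<lambda>t. u t + v t)) \<or> D1 (deriv h))"
    using d D1_deriv[OF uv(1)] D1_deriv[OF uv(2)] real_differentiable_def by blast
qed

definition sprod :: "((real \<Rightarrow> real) \<times> (real \<Rightarrow> real)) list \<Rightarrow> real \<Rightarrow> real" where
  "sprod ps t = (\<Sum>(u,v)\<leftarrow>ps. u t * v t)"

definition dps :: "((real \<Rightarrow> real) \<times> (real \<Rightarrow> real)) list \<Rightarrow> ((real \<Rightarrow> real) \<times> (real \<Rightarrow> real)) list" where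
  "dps ps = concat (map (\<lambda>(u,v). [(deriv u, v), (u, deriv v)]) ps)"

lemma sprod_deriv:
  "(\<forall>(u,v)\<in>set ps. D1 u \<and> D1 v) \<Longrightarrow> (sprod ps has_real_derivative sprod (dps ps) t) (at t)"
proof (induction ps)
  case Nil
  then show ?case by (simp add: sprod_def dps_def)
next
  case (Cons a ps)
  obtain u v where a: "a = (u,v)" by force
  have uv: "D1 u" "D1 v" using Cons.prems a by auto
  have e1: "sprod (a#ps) = (\<lambda>t. u t * v t + sprod ps t)" by (rule ext) (simp add: sprod_def a)
  have e2: "sprod (dps (a#ps)) t = deriv u t * v t + u t * deriv v t + sprod (dps ps) t"
    by (simp add: sprod_def dps_def a)
  show ?case unfolding e1 e2
    using Cons uv by (auto intro!: derivative_eq_intros D1_diff simp: algebra_simps)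
qed

lemma dps_D1: "(\<forall>(u,v)\<in>set ps. D1 u \<and> D1 v) \<Longrightarrow> (\<forall>(u,v)\<in>set (dps ps). D1 u \<and> D1 v)"
  by (auto simp: dps_def D1_deriv)

lemma D1_sprod: "(\<forall>(u,v)\<in>set ps. D1 u \<and> D1 v) \<Longrightarrow> D1 (sprod ps)"
proof (rule D1_coinduct'[where X="\<lambda>h. \<exists>ps. (\<forall>(u,v)\<in>set ps. D1 u \<and> D1 v) \<and> h = sprod ps"], blast)
  fix h assume "\<exists>ps. (\<forall>(u,v)\<in>set ps. D1 u \<and> D1 v) \<and> h = sprod ps"
  then obtain ps where ps: "\<forall>(u,v)\<in>set ps. D1 u \<and> D1 v" "h = sprod ps" by blast
  have d: "\<And>t. (h has_real_derivative sprod (dps ps) t) (at t)" using sprod_deriv[OF ps(1)] ps(2) by simp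
  hence "deriv h = sprod (dps ps)" by (intro ext DERIV_imp_deriv)
  thus "(\<forall>t. h differentiable at t) \<and> ((\<exists>ps. (\<forall>(u,v)\<in>set ps. D1 u \<and> D1 v) \<and> deriv h = sprod ps) \<or> D1 (deriv h))"
    using d dps_D1[OF ps(1)] real_differentiable_def by blast
qed

lemma D1_mult: "D1 u \<Longrightarrow> D1 v \<Longrightarrow> D1 (\<lambda>t. u t * v t)"
proof -
  assume "D1 u" "D1 v"
  hence "D1 (sprod [(u,v)])" by (intro D1_sprod) auto
  moreover have "sprod [(u,v)] = (\<lambda>t. u t * v t)" by (rule ext) (simp add: sprod_def)
  ultimately show ?thesis by simp
qed

lemma D1_cmult: "D1 u \<Longrightarrow> D1 (\<lambda>t. c * u t)"
  using D1_mult[OF D1_const] .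

lemma D1_uminus_cmult: "D1 u \<Longrightarrow> D1 (\<lambda>t. - (c * u t))"
  using D1_cmult[of u "-c"] by simp

lemma D1_affine: "D1 u \<Longrightarrow> D1 (\<lambda>t. u (a * t + b))"
proof (rule D1_coinduct'[where X="\<lambda>h. \<exists>v. D1 v \<and> h = (\<lambda>t. v (a * t + b))"], blast)
  fix h assume "\<exists>v. D1 v \<and> h = (\<lambda>t. v (a * t + b))"
  then obtain v where v: "D1 v" "h = (\<lambda>t. v (a * t + b))" by blast
  have d: "\<And>t. (h has_real_derivative (\<lambda>s. a * deriv v s) (a * t + b)) (at t)"
    unfolding v(2)
    by (rule DERIV_chain2[OF D1_diff[OF v(1)], THEN DERIV_cong]) (auto intro!: derivative_eq_intros)
  hence "deriv h = (\<lambda>t. (\<lambda>s. a * deriv v s) (a * t + b))" by (intro ext DERIV_imp_deriv)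
  thus "(\<forall>t. h differentiable at t) \<and> ((\<exists>v. D1 v \<and> deriv h = (\<lambda>t. v (a * t + b))) \<or> D1 (deriv h))"
    using d D1_cmult[OF D1_deriv[OF v(1)]] real_differentiable_def by blast
qed

definition sinv :: "(real \<Rightarrow> real) \<Rightarrow> ((real \<Rightarrow> real) \<times> nat) list \<Rightarrow> real \<Rightarrow> real" where
  "sinv w ps t = (\<Sum>(u,m)\<leftarrow>ps. u t * (1 / w t) ^ m)"

definition dinv :: "(real \<Rightarrow> real) \<Rightarrow> ((real \<Rightarrow> real) \<times> nat) list \<Rightarrow> ((real \<Rightarrow> real) \<times> nat) list" where
  "dinv w ps = concat (map (\<lambda>(u,m). [(deriv u, m), (\<lambda>t. (- real m) * (u t * deriv w t), Suc m)]) ps)"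

lemma sinv_deriv:
  assumes w: "D1 w" "\<And>t. w t \<noteq> 0"
  shows "(\<forall>(u,m)\<in>set ps. D1 u) \<Longrightarrow> (sinv w ps has_real_derivative sinv w (dinv w ps) t) (at t)"
proof (induction ps)
  case Nil
  then show ?case by (simp add: sinv_def dinv_def)
next
  case (Cons a ps)
  obtain u m where a: "a = (u,m)" by force
  have u: "D1 u" using Cons.prems a by auto
  have e1: "sinv w (a#ps) = (\<lambda>t. u t * (1 / w t) ^ m + sinv w ps t)" by (rule ext) (simp add: sinv_def a)
  have e2: "sinv w (dinv w (a#ps)) t = deriv u t * (1 / w t) ^ m + ((- real m) * (u t * deriv w t)) * (1 / w t) ^ Suc m + sinv w (dinv w ps) t"
    by (simp add: sinv_def dinv_def a)
  have dw: "((\<lambda>t. (1 / w t) ^ m) has_real_derivative (- real m * deriv w t) * (1 / w t) ^ Suc m) (at t)"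
  proof (cases m)
    case 0 then show ?thesis by simp
  next
    case (Suc k)
    have h1: "((\<lambda>t. 1 / w t) has_real_derivative (- deriv w t) * (1 / w t)^2) (at t)"
      using w(2)[of t]
      by (auto intro!: derivative_eq_intros D1_diff w(1) simp: power2_eq_square field_simps)
    note h2 = DERIV_power[OF h1, of m]
    show ?thesis
      using w(2)[of t] by (intro DERIV_cong[OF h2]) (simp add: Suc power_Suc power2_eq_square field_simps)
  qed
  have ih: "(sinv w ps has_real_derivative sinv w (dinv w ps) t) (at t)"
    using Cons by auto
  show ?case unfolding e1 e2
    by (rule DERIV_cong[OF DERIV_add[OF DERIV_mult[OF D1_diff[OF u] dw] ih]]) (simp add: algebra_simps)
qed

lemma D1_inverse:
  assumes w: "D1 w" "\<And>t. w t \<noteq> 0"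
  shows "D1 (\<lambda>t. 1 / w t)"
proof -
  have main: "(\<forall>(u,m)\<in>set ps. D1 u) \<Longrightarrow> D1 (sinv w ps)" for ps
  proof (rule D1_coinduct'[where X="\<lambda>h. \<exists>ps. (\<forall>(u,m)\<in>set ps. D1 u) \<and> h = sinv w ps"], blast)
    fix h assume "\<exists>ps. (\<forall>(u,m)\<in>set ps. D1 u) \<and> h = sinv w ps"
    then obtain ps where ps: "\<forall>(u,m)\<in>set ps. D1 u" "h = sinv w ps" by blast
    have d: "\<And>t. (h has_real_derivative sinv w (dinv w ps) t) (at t)" using sinv_deriv[OF w ps(1)] ps(2) by simp
    hence "deriv h = sinv w (dinv w ps)" by (intro ext DERIV_imp_deriv)
    moreover have "\<forall>(u,m)\<in>set (dinv w ps). D1 u"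
      using ps(1) by (auto simp: dinv_def D1_deriv intro!: D1_mult D1_cmult D1_uminus_cmult w(1) D1_deriv)
    ultimately show "(\<forall>t. h differentiable at t) \<and> ((\<exists>ps. (\<forall>(u,m)\<in>set ps. D1 u) \<and> deriv h = sinv w ps) \<or> D1 (deriv h))"
      using d real_differentiable_def by blast
  qed
  have "D1 (sinv w [(\<lambda>t. 1, 1)])" by (rule main) (simp add: D1_const)
  moreover have "sinv w [(\<lambda>t. 1, 1)] = (\<lambda>t. 1 / w t)" by (rule ext) (simp add: sinv_def)
  ultimately show ?thesis by simp
qed



definition Phi :: "nat \<Rightarrow> real \<Rightarrow> real" where
  "Phi m t = (if t > 0 then (1 / t) ^ m * exp (- (1 / t)) else 0)"

lemma Phi_deriv_pos:
  assumes "t > 0"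
  shows "(Phi m has_real_derivative (Phi (Suc (Suc m)) t - real m * Phi (Suc m) t)) (at t)"
proof -
  have d: "((\<lambda>t. (1 / t) ^ m * exp (- (1 / t))) has_real_derivative
            (Phi (Suc (Suc m)) t - real m * Phi (Suc m) t)) (at t)"
  proof -
    have h1: "((\<lambda>t. 1 / t) has_real_derivative - ((1 / t)^2)) (at t)"
      using assms by (auto intro!: derivative_eq_intros simp: power2_eq_square field_simps)
    have h2: "((\<lambda>t. exp (- (1 / t))) has_real_derivative exp (- (1 / t)) * (1 / t)^2) (at t)"
      using assms by (auto intro!: derivative_eq_intros simp: power2_eq_square field_simps)
    note h3 = DERIV_mult[OF DERIV_power[OF h1, of m] h2]
    show ?thesis
      by (rule DERIV_cong[OF h3]) (cases m, use assms in \<open>auto simp: Phi_def power_Suc power2_eq_square field_simps\<close>)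
  qed
  show ?thesis
    by (rule has_field_derivative_transform_within_open[OF d, of "{0<..}"]) (use assms in \<open>auto simp: Phi_def\<close>)
qed

lemma Phi_deriv_neg:
  assumes "t < 0"
  shows "(Phi m has_real_derivative (Phi (Suc (Suc m)) t - real m * Phi (Suc m) t)) (at t)"
proof -
  have d: "((\<lambda>t. 0) has_real_derivative 0) (at t)" by simp
  have "(Phi m has_real_derivative 0) (at t)"
    by (rule has_field_derivative_transform_within_open[OF d, of "{..<0}"]) (use assms in \<open>auto simp: Phi_def\<close>)
  thus ?thesis using assms by (simp add: Phi_def)
qed

lemma Phi_deriv_0:
  "(Phi m has_real_derivative (Phi (Suc (Suc m)) 0 - real m * Phi (Suc m) 0)) (at 0)"
proof -
  have "((\<lambda>h. (Phi m (0 + h) - Phi m 0) / h) \<longlongrightarrow> 0) (at 0)"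
  proof (rule filterlim_split_at)
    show "((\<lambda>h. (Phi m (0 + h) - Phi m 0) / h) \<longlongrightarrow> 0) (at_left 0)"
    proof (rule tendsto_eventually)
      show "\<forall>\<^sub>F h in at_left 0. (Phi m (0 + h) - Phi m 0) / h = 0"
        using eventually_at_left_real[of "-1" 0, OF neg_less_0_iff_less[THEN iffD2, OF zero_less_one]] by eventually_elim (auto simp: Phi_def)
    qed
    have lim: "((\<lambda>h. (inverse h) ^ Suc m / exp (inverse h)) \<longlongrightarrow> 0) (at_right (0::real))"
      by (rule filterlim_compose[OF tendsto_power_div_exp_0 filterlim_inverse_at_top_right])
    show "((\<lambda>h. (Phi m (0 + h) - Phi m 0) / h) \<longlongrightarrow> 0) (at_right 0)"
    proof (rule Lim_transform_eventually[OF lim])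
      show "\<forall>\<^sub>F h in at_right 0. inverse h ^ Suc m / exp (inverse h) = (Phi m (0 + h) - Phi m 0) / h"
        using eventually_at_right_real[of 0 1, OF zero_less_one] by eventually_elim
          (auto simp: Phi_def exp_minus field_simps)
    qed
  qed
  thus ?thesis by (simp add: DERIV_def Phi_def)
qed

lemma Phi_deriv:
  "(Phi m has_real_derivative (Phi (Suc (Suc m)) t - real m * Phi (Suc m) t)) (at t)"
  using Phi_deriv_pos[of t m] Phi_deriv_neg[of t m] Phi_deriv_0[of m]
  by (cases "t > 0"; cases "t < 0") (auto simp: not_less order.antisym)

inductive_set EPhi :: "(real \<Rightarrow> real) set" where
  "Phi m \<in> EPhi"
| "u \<in> EPhi \<Longrightarrow> v \<in> EPhi \<Longrightarrow> (\<lambda>t. u t + v t) \<in> EPhi"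
| "u \<in> EPhi \<Longrightarrow> (\<lambda>t. c * u t) \<in> EPhi"

lemma EPhi_deriv: "u \<in> EPhi \<Longrightarrow> \<exists>u'\<in>EPhi. \<forall>t. (u has_real_derivative u' t) (at t)"
proof (induction rule: EPhi.induct)
  case (1 m)
  have "(\<lambda>t. Phi (Suc (Suc m)) t + (- real m) * Phi (Suc m) t) \<in> EPhi"
    by (intro EPhi.intros)
  then show ?case using Phi_deriv[of m] by (intro bexI[of _ "(\<lambda>t. Phi (Suc (Suc m)) t + (- real m) * Phi (Suc m) t)"]) auto
next
  case (2 u v)
  then obtain u' v' where "u' \<in> EPhi" "v' \<in> EPhi" "\<And>t. (u has_real_derivative u' t) (at t)"
    "\<And>t. (v has_real_derivative v' t) (at t)" by blast
  then show ?case by (intro bexI[of _ "\<lambda>t. u' t + v' t"] allI DERIV_add EPhi.intros) auto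
next
  case (3 u c)
  then obtain u' where "u' \<in> EPhi" "\<And>t. (u has_real_derivative u' t) (at t)" by blast
  then show ?case by (intro bexI[of _ "\<lambda>t. c * u' t"] allI DERIV_cmult EPhi.intros) auto
qed

lemma EPhi_D1: "u \<in> EPhi \<Longrightarrow> D1 u"
proof (rule D1_coinduct'[where X="\<lambda>u. u \<in> EPhi"])
  fix h assume "h \<in> EPhi"
  then obtain u' where u': "u' \<in> EPhi" "\<And>t. (h has_real_derivative u' t) (at t)" using EPhi_deriv by blast
  hence "deriv h = u'" by (intro ext DERIV_imp_deriv)
  thus "(\<forall>t. h differentiable at t) \<and> (deriv h \<in> EPhi \<or> D1 (deriv h))"
    using u' real_differentiable_def by blast
qed

lemma D1_Phi0: "D1 (Phi 0)"
  by (rule EPhi_D1) (rule EPhi.intros)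



definition phi :: "real \<Rightarrow> real" where "phi = Phi 0"

lemma phi_simp: "phi t = (if t > 0 then exp (- (1 / t)) else 0)"
  by (simp add: phi_def Phi_def)

lemma phi_nonneg: "0 \<le> phi t" by (simp add: phi_simp)
lemma phi_pos: "t > 0 \<Longrightarrow> 0 < phi t" by (simp add: phi_simp)
lemma phi_zero: "t \<le> 0 \<Longrightarrow> phi t = 0" by (simp add: phi_simp)
lemma phi_mono: "t \<le> t' \<Longrightarrow> phi t \<le> phi t'"
  by (auto simp: phi_simp frac_le)

definition sig :: "real \<Rightarrow> real" where
  "sig t = phi t * (1 / (phi t + phi (1 - t)))"

lemma sig_den_pos: "0 < phi t + phi (1 - t)"
proof (cases "t > 0")
  case True thus ?thesis using phi_pos[of t] phi_nonneg[of "1-t"] by simp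
next
  case False thus ?thesis using phi_pos[of "1-t"] phi_nonneg[of t] by simp
qed

lemma D1_sig: "D1 sig"
proof -
  have p: "D1 phi" unfolding phi_def by (rule D1_Phi0)
  have p2: "D1 (\<lambda>t. phi ((-1) * t + 1))" by (rule D1_affine[OF p])
  have "D1 (\<lambda>t. phi t + phi ((-1) * t + 1))" by (rule D1_add[OF p p2])
  hence "D1 (\<lambda>t. 1 / (phi t + phi ((-1) * t + 1)))"
    by (rule D1_inverse) (use sig_den_pos in \<open>simp add: less_imp_neq[symmetric]\<close>)
  hence "D1 (\<lambda>t. phi t * (1 / (phi t + phi ((-1) * t + 1))))" by (rule D1_mult[OF p])
  thus ?thesis unfolding sig_def[abs_def] by simp
qed

lemma sig_zero: "t \<le> 0 \<Longrightarrow> sig t = 0" by (simp add: sig_def phi_zero)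
lemma sig_one: "t \<ge> 1 \<Longrightarrow> sig t = 1"
  using phi_pos[of t] by (simp add: sig_def phi_zero)

lemma sig_mono: assumes "t \<le> t'" shows "sig t \<le> sig t'"
proof -
  have a: "phi t \<le> phi t'" "phi (1 - t') \<le> phi (1 - t)" using assms by (auto intro: phi_mono)
  have "phi t * phi (1 - t') \<le> phi t' * phi (1 - t)"
    using a by (intro mult_mono) (auto simp: phi_nonneg)
  hence "phi t * (phi t' + phi (1 - t')) \<le> phi t' * (phi t + phi (1 - t))"
    by (simp add: algebra_simps)
  thus ?thesis using sig_den_pos[of t] sig_den_pos[of t']
    by (simp add: sig_def divide_simps mult.commute)
qed

definition theta :: "real \<Rightarrow> real" where "theta s = sig (s + 1) - sig s"

lemma D1_theta: "D1 theta"
proof -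
  have "D1 (\<lambda>s. sig (1 * s + 1) + (-1) * sig s)"
    by (intro D1_add D1_cmult D1_affine D1_sig)
  thus ?thesis unfolding theta_def[abs_def] by simp
qed

lemma theta_nonneg: "0 \<le> theta s" by (simp add: theta_def sig_mono)

lemma theta_zero: "\<bar>s\<bar> \<ge> 1 \<Longrightarrow> theta s = 0"
proof (cases "s < 0")
  case True
  assume "\<bar>s\<bar> \<ge> 1" thus ?thesis using True by (simp add: theta_def sig_zero)
next
  case False
  assume "\<bar>s\<bar> \<ge> 1" thus ?thesis using False by (simp add: theta_def sig_one)
qed

lemma theta_sum:
  "(\<Sum>j\<in>{\<lfloor>s\<rfloor> - 1..\<lfloor>s\<rfloor> + 1}. theta (s - of_int j)) = 1"
proof -
  define m where "m = \<lfloor>s\<rfloor>"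
  have m: "of_int m \<le> s" "s < of_int m + 1" unfolding m_def by linarith+
  have "{m - 1..m + 1} = {m - 1, m, m + 1}" by auto
  hence "(\<Sum>j\<in>{m - 1..m + 1}. theta (s - of_int j)) = theta (s - of_int (m - 1)) + theta (s - of_int m) + theta (s - of_int (m + 1))"
    by simp
  also have "\<dots> = 1"
    using m by (simp add: theta_def sig_zero sig_one)
  finally show ?thesis unfolding m_def .
qed



definition Qf :: "('a \<Rightarrow> int) set \<Rightarrow> (('a \<Rightarrow> int) \<Rightarrow> real) \<Rightarrow> (('a \<Rightarrow> int) \<Rightarrow> 'a \<Rightarrow> real \<Rightarrow> real) \<Rightarrow> 'a::euclidean_space \<Rightarrow> real" where
  "Qf J c u x = (\<Sum>j\<in>J. c j * (\<Prod>i\<in>Basis. u j i (x \<bullet> i)))"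

definition ud :: "'a \<Rightarrow> (('a \<Rightarrow> int) \<Rightarrow> 'a \<Rightarrow> real \<Rightarrow> real) \<Rightarrow> (('a \<Rightarrow> int) \<Rightarrow> 'a::euclidean_space \<Rightarrow> real \<Rightarrow> real)" where
  "ud b u j i = (if i = b then deriv (u j i) else u j i)"

lemma ud_D1: "(\<forall>j i. D1 (u j i)) \<Longrightarrow> (\<forall>j i. D1 (ud b u j i))"
  by (simp add: ud_def D1_deriv)

lemma Qf_has_derivative:
  assumes "\<forall>j i. D1 (u j i)"
  shows "(Qf J c u has_derivative
     (\<lambda>v. \<Sum>j\<in>J. c j * (\<Sum>i\<in>Basis. (v \<bullet> i * deriv (u j i) (x \<bullet> i)) * (\<Prod>k\<in>Basis - {i}. u j k (x \<bullet> k))))) (at x)"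
proof -
  have c: "((\<lambda>x. u j i (x \<bullet> i)) has_derivative (\<lambda>v. v \<bullet> i * deriv (u j i) (x \<bullet> i))) (at x)" for j i
    by (rule DERIV_compose_FDERIV[OF D1_diff]) (use assms in \<open>auto intro!: derivative_eq_intros\<close>)
  show ?thesis unfolding Qf_def[abs_def]
    by (intro has_derivative_sum has_derivative_mult_right has_derivative_prod c)
qed

lemma sum_Basis_delta:
  fixes D P :: "'a::euclidean_space \<Rightarrow> real"
  assumes "b \<in> Basis"
  shows "(\<Sum>i\<in>Basis. (b \<bullet> i * D i) * P i) = D b * P b"
proof -
  have "(\<Sum>i\<in>Basis. (b \<bullet> i * D i) * P i) = (b \<bullet> b * D b) * P b + (\<Sum>i\<in>Basis - {b}. (b \<bullet> i * D i) * P i)"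
    using assms by (simp add: sum.remove)
  also have "(\<Sum>i\<in>Basis - {b}. (b \<bullet> i * D i) * P i) = 0"
    using assms by (intro sum.neutral) (auto simp: inner_Basis)
  finally show ?thesis using assms by simp
qed

lemma Qf_frechet:
  assumes "\<forall>j i. D1 (u j i)" "b \<in> Basis"
  shows "frechet_derivative (Qf J c u) (at x) b = Qf J c (ud b u) x"
proof -
  have e: "frechet_derivative (Qf J c u) (at x) = (\<lambda>v. \<Sum>j\<in>J. c j * (\<Sum>i\<in>Basis. (v \<bullet> i * deriv (u j i) (x \<bullet> i)) * (\<Prod>k\<in>Basis - {i}. u j k (x \<bullet> k))))"
    by (rule frechet_derivative_at[OF Qf_has_derivative[OF assms(1)], symmetric])
  have "frechet_derivative (Qf J c u) (at x) b = (\<Sum>j\<in>J. c j * (deriv (u j b) (x \<bullet> b) * (\<Prod>k\<in>Basis - {b}. u j k (x \<bullet> k))))"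
    unfolding e by (simp only: sum_Basis_delta[OF assms(2)])
  also have "\<dots> = Qf J c (ud b u) x"
    unfolding Qf_def
  proof (intro sum.cong refl)
    fix j
    have "(\<Prod>i\<in>Basis. ud b u j i (x \<bullet> i)) = ud b u j b (x \<bullet> b) * (\<Prod>i\<in>Basis - {b}. ud b u j i (x \<bullet> i))"
      using assms(2) by (simp add: prod.remove)
    also have "(\<Prod>i\<in>Basis - {b}. ud b u j i (x \<bullet> i)) = (\<Prod>k\<in>Basis - {b}. u j k (x \<bullet> k))"
      by (intro prod.cong refl) (simp add: ud_def)
    finally show "c j * (deriv (u j b) (x \<bullet> b) * (\<Prod>k\<in>Basis - {b}. u j k (x \<bullet> k))) = c j * (\<Prod>i\<in>Basis. ud b u j i (x \<bullet> i))"
      by (simp add: ud_def)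
  qed
  finally show ?thesis .
qed

definition Pset :: "('a::euclidean_space \<Rightarrow> real) \<Rightarrow> bool" where
  "Pset F \<longleftrightarrow> (\<forall>x0. \<exists>U J c u. open U \<and> x0 \<in> U \<and> (\<forall>j i. D1 (u j i)) \<and>
      (\<forall>x\<in>U. F x = Qf J c u x))"

lemma smooth_coinduct':
  assumes "X f" and "\<And>h. X h \<Longrightarrow> (\<forall>x. h differentiable (at x)) \<and>
     (\<forall>b\<in>Basis. X (\<lambda>x. frechet_derivative h (at x) b) \<or> smooth (\<lambda>x. frechet_derivative h (at x) b))"
  shows "smooth f"
  using assms(1)
proof (coinduction arbitrary: f rule: smooth.coinduct)
  case (smooth f)
  then show ?case using assms(2)[of f] by simp
qed

lemma Pset_smooth: "Pset F \<Longrightarrow> smooth F"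
proof (rule smooth_coinduct'[where X=Pset])
  fix h :: "'a \<Rightarrow> real" assume P: "Pset h"
  have loc: "\<exists>U J c u. open U \<and> x0 \<in> U \<and> (\<forall>j i. D1 (u j i)) \<and> (\<forall>x\<in>U. h x = Qf J c u x) \<and>
     (\<forall>x\<in>U. (h has_derivative frechet_derivative (Qf J c u) (at x)) (at x))" for x0
  proof -
    obtain U J c u where U: "open U" "x0 \<in> U" "\<forall>j i. D1 (u j i)" "\<forall>x\<in>U. h x = Qf J c u x"
      using P unfolding Pset_def by meson
    have "(h has_derivative frechet_derivative (Qf J c u) (at x)) (at x)" if "x \<in> U" for x
    proof (rule has_derivative_transform_within_open[OF _ U(1) that])
      show "(Qf J c u has_derivative frechet_derivative (Qf J c u) (at x)) (at x)"
        using Qf_has_derivative[OF U(3), of J c x] frechet_derivative_at[OF Qf_has_derivative[OF U(3), of J c x]] by simp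
      show "\<And>y. y \<in> U \<Longrightarrow> Qf J c u y = h y" using U(4) by simp
    qed
    thus ?thesis using U by (intro exI[of _ U] exI[of _ J] exI[of _ c] exI[of _ u]) simp
  qed
  have "h differentiable (at x)" for x
  proof -
    obtain U J c u where "x \<in> U" "(\<forall>x\<in>U. (h has_derivative frechet_derivative (Qf J c u) (at x)) (at x))"
      using loc[of x] by meson
    thus ?thesis unfolding differentiable_def by blast
  qed
  moreover have "Pset (\<lambda>x. frechet_derivative h (at x) b)" if b: "b \<in> Basis" for b
    unfolding Pset_def
  proof
    fix x0
    obtain U J c u where U: "open U" "x0 \<in> U" "\<forall>j i. D1 (u j i)" "\<forall>x\<in>U. h x = Qf J c u x"
       "\<forall>x\<in>U. (h has_derivative frechet_derivative (Qf J c u) (at x)) (at x)"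
      using loc[of x0] by meson
    have "\<forall>x\<in>U. frechet_derivative h (at x) b = Qf J c (ud b u) x"
    proof
      fix x assume "x \<in> U"
      hence "frechet_derivative h (at x) = frechet_derivative (Qf J c u) (at x)"
        using U(5) frechet_derivative_at by (metis)
      thus "frechet_derivative h (at x) b = Qf J c (ud b u) x" using Qf_frechet[OF U(3) b] by simp
    qed
    thus "\<exists>U J c u. open U \<and> x0 \<in> U \<and> (\<forall>j i. D1 (u j i)) \<and> (\<forall>x\<in>U. frechet_derivative h (at x) b = Qf J c u x)"
      using U ud_D1[OF U(3)] by (intro exI[of _ U] exI[of _ J] exI[of _ c] exI[of _ "ud b u"]) simp
  qed
  ultimately show "(\<forall>x. h differentiable (at x)) \<and>
     (\<forall>b\<in>Basis. Pset (\<lambda>x. frechet_derivative h (at x) b) \<or> smooth (\<lambda>x. frechet_derivative h (at x) b))"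
    by simp
qed



definition psi :: "real \<Rightarrow> ('a \<Rightarrow> int) \<Rightarrow> 'a::euclidean_space \<Rightarrow> real" where
  "psi \<delta> z x = (\<Prod>i\<in>Basis. theta (x \<bullet> i / \<delta> - of_int (z i)))"

definition Sx :: "real \<Rightarrow> 'a::euclidean_space \<Rightarrow> ('a \<Rightarrow> int) set" where
  "Sx \<delta> x = PiE Basis (\<lambda>i. {\<lfloor>x \<bullet> i / \<delta>\<rfloor> - 1..\<lfloor>x \<bullet> i / \<delta>\<rfloor> + 1})"

definition gfun :: "real \<Rightarrow> (('a \<Rightarrow> int) \<Rightarrow> real) \<Rightarrow> 'a::euclidean_space \<Rightarrow> real" where
  "gfun \<delta> a x = (\<Sum>z\<in>Sx \<delta> x. a z * psi \<delta> z x)"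

lemma finite_Sx: "finite (Sx \<delta> x)"
  by (simp add: Sx_def finite_PiE)

lemma psi_nonneg: "0 \<le> psi \<delta> z x"
  by (simp add: psi_def prod_nonneg theta_nonneg)

lemma psi_supp: "psi \<delta> z x \<noteq> 0 \<Longrightarrow> i \<in> Basis \<Longrightarrow> \<bar>x \<bullet> i / \<delta> - of_int (z i)\<bar> < 1"
  unfolding psi_def using theta_zero by (metis linorder_not_le prod_zero_iff finite_Basis)

lemma psi_zero:
  fixes x :: "'a::euclidean_space" and z :: "'a \<Rightarrow> int"
  assumes "z \<in> PiE Basis (\<lambda>_. UNIV)" "z \<notin> Sx \<delta> x"
  shows "psi \<delta> z x = 0"
proof (rule ccontr)
  assume nz: "psi \<delta> z x \<noteq> 0"
  have "z \<in> Sx \<delta> x"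
    unfolding Sx_def
  proof (rule PiE_I)
    fix i :: 'a assume i: "i \<in> Basis"
    have "\<bar>x \<bullet> i / \<delta> - of_int (z i)\<bar> < 1" by (rule psi_supp[OF nz i])
    thus "z i \<in> {\<lfloor>x \<bullet> i / \<delta>\<rfloor> - 1..\<lfloor>x \<bullet> i / \<delta>\<rfloor> + 1}"
      by (auto simp: abs_less_iff) linarith+
  next
    fix i :: 'a assume "i \<notin> Basis" thus "z i = undefined" using assms(1) by (auto simp: PiE_def extensional_def)
  qed
  thus False using assms(2) by simp
qed

lemma psi_sum: "(\<Sum>z\<in>Sx \<delta> x. psi \<delta> z x) = 1"
proof -
  have "(\<Sum>z\<in>Sx \<delta> x. psi \<delta> z x) = (\<Prod>i\<in>Basis. \<Sum>j\<in>{\<lfloor>x \<bullet> i / \<delta>\<rfloor> - 1..\<lfloor>x \<bullet> i / \<delta>\<rfloor> + 1}. theta (x \<bullet> i / \<delta> - of_int j))"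
    unfolding Sx_def psi_def by (rule prod_sum_PiE[symmetric]) auto
  also have "\<dots> = 1" by (simp add: theta_sum)
  finally show ?thesis .
qed

lemma gfun_local:
  assumes "\<delta> > 0" "x \<in> ball x0 \<delta>"
  shows "gfun \<delta> a x = Qf (PiE Basis (\<lambda>i. {\<lfloor>x0 \<bullet> i / \<delta>\<rfloor> - 2..\<lfloor>x0 \<bullet> i / \<delta>\<rfloor> + 2})) a
            (\<lambda>z i t. theta ((1 / \<delta>) * t + (- of_int (z i)))) x"
proof -
  let ?T = "PiE Basis (\<lambda>i. {\<lfloor>x0 \<bullet> i / \<delta>\<rfloor> - 2..\<lfloor>x0 \<bullet> i / \<delta>\<rfloor> + 2})"
  have sub: "Sx \<delta> x \<subseteq> ?T"
    unfolding Sx_def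
  proof (rule PiE_mono)
    fix i :: 'a assume i: "i \<in> Basis"
    have "\<bar>x \<bullet> i - x0 \<bullet> i\<bar> < \<delta>"
      using assms(2) Basis_le_norm[OF i, of "x - x0"] by (simp add: dist_norm norm_minus_commute inner_diff_left)
    hence "\<bar>x \<bullet> i / \<delta> - x0 \<bullet> i / \<delta>\<bar> < 1" using assms(1)
      by (simp add: diff_divide_distrib[symmetric] abs_divide)
    hence "\<lfloor>x \<bullet> i / \<delta>\<rfloor> \<le> \<lfloor>x0 \<bullet> i / \<delta>\<rfloor> + 1" "\<lfloor>x0 \<bullet> i / \<delta>\<rfloor> \<le> \<lfloor>x \<bullet> i / \<delta>\<rfloor> + 1"
      by (auto simp: abs_less_iff) linarith+
    thus "{\<lfloor>x \<bullet> i / \<delta>\<rfloor> - 1..\<lfloor>x \<bullet> i / \<delta>\<rfloor> + 1} \<subseteq> {\<lfloor>x0 \<bullet> i / \<delta>\<rfloor> - 2..\<lfloor>x0 \<bullet> i / \<delta>\<rfloor> + 2}"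
      by auto
  qed
  have "gfun \<delta> a x = (\<Sum>z\<in>?T. a z * psi \<delta> z x)"
    unfolding gfun_def
  proof (rule sum.mono_neutral_left)
    show "finite ?T" by (simp add: finite_PiE)
    show "Sx \<delta> x \<subseteq> ?T" by (rule sub)
    show "\<forall>z\<in>?T - Sx \<delta> x. a z * psi \<delta> z x = 0"
    proof
      fix z assume "z \<in> ?T - Sx \<delta> x"
      moreover have "?T \<subseteq> PiE Basis (\<lambda>_. UNIV)" by (rule PiE_mono) auto
      ultimately have "psi \<delta> z x = 0" by (intro psi_zero) auto
      thus "a z * psi \<delta> z x = 0" by simp
    qed
  qed
  also have "\<dots> = Qf ?T a (\<lambda>z i t. theta ((1 / \<delta>) * t + (- of_int (z i)))) x"
    unfolding Qf_def psi_def by simp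
  finally show ?thesis .
qed

lemma gfun_smooth:
  assumes "\<delta> > 0"
  shows "smooth (gfun \<delta> a)"
proof (rule Pset_smooth)
  show "Pset (gfun \<delta> a)"
    unfolding Pset_def
  proof
    fix x0 :: 'a
    have "\<forall>z i. D1 ((\<lambda>z i t. theta ((1 / \<delta>) * t + (- of_int (z i)))) z i)"
      by (intro allI D1_affine D1_theta)
    thus "\<exists>U J c u. open U \<and> x0 \<in> U \<and> (\<forall>j i. D1 (u j i)) \<and> (\<forall>x\<in>U. gfun \<delta> a x = Qf J c u x)"
      using gfun_local[OF assms] assms
      by (intro exI[of _ "ball x0 \<delta>"] exI[of _ "PiE Basis (\<lambda>i. {\<lfloor>x0 \<bullet> i / \<delta>\<rfloor> - 2..\<lfloor>x0 \<bullet> i / \<delta>\<rfloor> + 2})"]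
          exI[of _ a] exI[of _ "\<lambda>z i t. theta ((1 / \<delta>) * t + (- of_int (z i)))"]) auto
  qed
qed



lemma emeasure_lebesgue_borel:
  fixes S :: "'a::euclidean_space set"
  assumes "S \<in> sets borel"
  shows "emeasure lebesgue S = emeasure lborel S"
  using assms by simp

lemma meas_pow:
  fixes h :: "'a::euclidean_space \<Rightarrow> real"
  assumes "h \<in> borel_measurable lebesgue" "A \<in> sets lebesgue"
  shows "(\<lambda>y. ennreal (\<bar>h y\<bar> powr p) * indicator A y) \<in> borel_measurable lebesgue"
  using assms by measurable

lemma ball_meas: "emeasure lebesgue (ball (x::'a::euclidean_space) r) \<le> ennreal (r ^ DIM('a)) * emeasure lebesgue (ball (0::'a) 1)"
proof (cases "r \<ge> 0")
  case True thus ?thesis using emeasure_lebesgue_ball_conv_unit_ball[OF True, of x] by (metis order_refl)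
next
  case False hence e: "ball x r = {}" by auto
  show ?thesis unfolding e by simp
qed

lemma unit_ball_finite: "emeasure lebesgue (ball (0::'a::euclidean_space) 1) < \<infinity>"
  using emeasure_lborel_ball_finite[of "0::'a" 1] by simp

lemma powr_split:
  fixes a b p :: real
  assumes "0 \<le> a" "0 \<le> b" "0 \<le> p"
  shows "(a + b) powr p \<le> 2 powr p * (a powr p + b powr p)"
proof -
  have "(a + b) powr p \<le> (2 * max a b) powr p"
    using assms by (intro powr_mono2) auto
  also have "\<dots> = 2 powr p * max a b powr p" using assms by (simp add: powr_mult)
  also have "max a b powr p \<le> a powr p + b powr p"
    by (cases "a \<le> b") (auto simp: max_def)
  hence "2 powr p * max a b powr p \<le> 2 powr p * (a powr p + b powr p)"
    by (intro mult_left_mono) auto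
  finally show ?thesis .
qed

lemma morrey_bounded:
  fixes h :: "'a::euclidean_space \<Rightarrow> real"
  assumes "\<And>y. \<bar>h y\<bar> \<le> \<eta>" "0 \<le> p"
  shows "morrey_M p lam h x r \<le> ennreal (r powr (-lam) * \<eta> powr p * r ^ DIM('a)) * emeasure lebesgue (ball (0::'a) 1)"
proof -
  have eta: "0 \<le> \<eta>" using assms(1)[of x] by linarith
  have "(\<integral>\<^sup>+ y \<in> ball x r. ennreal (\<bar>h y\<bar> powr p) \<partial>lebesgue) \<le> (\<integral>\<^sup>+ y. ennreal (\<eta> powr p) * indicator (ball x r) y \<partial>lebesgue)"
    by (intro nn_integral_mono) (auto split: split_indicator intro!: powr_mono2 assms)
  also have "\<dots> = ennreal (\<eta> powr p) * emeasure lebesgue (ball x r)"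
    by (rule nn_integral_cmult_indicator) simp
  also have "\<dots> \<le> ennreal (\<eta> powr p) * (ennreal (r ^ DIM('a)) * emeasure lebesgue (ball (0::'a) 1))"
    by (intro mult_left_mono ball_meas) simp
  finally have i: "(\<integral>\<^sup>+ y \<in> ball x r. ennreal (\<bar>h y\<bar> powr p) \<partial>lebesgue) \<le> ennreal (\<eta> powr p) * (ennreal (r ^ DIM('a)) * emeasure lebesgue (ball (0::'a) 1))" .
  show ?thesis
  proof (cases "r \<ge> 0")
    case True
    have "morrey_M p lam h x r \<le> ennreal (r powr (-lam)) * (ennreal (\<eta> powr p) * (ennreal (r ^ DIM('a)) * emeasure lebesgue (ball (0::'a) 1)))"
      unfolding morrey_M_def by (intro mult_left_mono i) simp
    also have "\<dots> = ennreal (r powr (-lam) * \<eta> powr p * r ^ DIM('a)) * emeasure lebesgue (ball (0::'a) 1)"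
      using True by (simp add: ennreal_mult mult.assoc)
    finally show ?thesis .
  next
    case False hence e: "ball x r = {}" by auto
    show ?thesis unfolding morrey_M_def e by simp
  qed
qed

lemma morrey_split:
  fixes h1 h2 h3 :: "'a::euclidean_space \<Rightarrow> real"
  assumes "\<And>y. \<bar>h1 y\<bar> \<le> \<bar>h2 y\<bar> + \<bar>h3 y\<bar>" "0 \<le> p"
    "h2 \<in> borel_measurable lebesgue" "h3 \<in> borel_measurable lebesgue"
  shows "morrey_M p lam h1 x r \<le> ennreal (2 powr p) * (morrey_M p lam h2 x r + morrey_M p lam h3 x r)"
proof -
  have "(\<integral>\<^sup>+ y \<in> ball x r. ennreal (\<bar>h1 y\<bar> powr p) \<partial>lebesgue) \<le>
     (\<integral>\<^sup>+ y. ennreal (2 powr p) * (ennreal (\<bar>h2 y\<bar> powr p) * indicator (ball x r) y + ennreal (\<bar>h3 y\<bar> powr p) * indicator (ball x r) y) \<partial>lebesgue)"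
  proof (intro nn_integral_mono)
    fix y
    have "\<bar>h1 y\<bar> powr p \<le> (\<bar>h2 y\<bar> + \<bar>h3 y\<bar>) powr p"
      by (intro powr_mono2 assms) auto
    also have "\<dots> \<le> 2 powr p * (\<bar>h2 y\<bar> powr p + \<bar>h3 y\<bar> powr p)"
      by (intro powr_split) (auto simp: assms)
    finally have "ennreal (\<bar>h1 y\<bar> powr p) \<le> ennreal (2 powr p) * (ennreal (\<bar>h2 y\<bar> powr p) + ennreal (\<bar>h3 y\<bar> powr p))"
      by (simp add: ennreal_mult[symmetric] ennreal_plus[symmetric] del: ennreal_plus)
    thus "ennreal (\<bar>h1 y\<bar> powr p) * indicator (ball x r) y \<le> ennreal (2 powr p) * (ennreal (\<bar>h2 y\<bar> powr p) * indicator (ball x r) y + ennreal (\<bar>h3 y\<bar> powr p) * indicator (ball x r) y)"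
      by (auto split: split_indicator)
  qed
  also have "\<dots> = ennreal (2 powr p) * ((\<integral>\<^sup>+ y \<in> ball x r. ennreal (\<bar>h2 y\<bar> powr p) \<partial>lebesgue) + (\<integral>\<^sup>+ y \<in> ball x r. ennreal (\<bar>h3 y\<bar> powr p) \<partial>lebesgue))"
  proof -
    have m2: "(\<lambda>y. ennreal (\<bar>h2 y\<bar> powr p) * indicator (ball x r) y) \<in> borel_measurable lebesgue"
      by (rule meas_pow[OF assms(3)]) simp
    have m3: "(\<lambda>y. ennreal (\<bar>h3 y\<bar> powr p) * indicator (ball x r) y) \<in> borel_measurable lebesgue"
      by (rule meas_pow[OF assms(4)]) simp
    show ?thesis
      by (subst nn_integral_cmult) (use m2 m3 in \<open>simp_all add: nn_integral_add\<close>)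
  qed
  finally have i: "(\<integral>\<^sup>+ y \<in> ball x r. ennreal (\<bar>h1 y\<bar> powr p) \<partial>lebesgue) \<le> ennreal (2 powr p) * ((\<integral>\<^sup>+ y \<in> ball x r. ennreal (\<bar>h2 y\<bar> powr p) \<partial>lebesgue) + (\<integral>\<^sup>+ y \<in> ball x r. ennreal (\<bar>h3 y\<bar> powr p) \<partial>lebesgue))" .
  show ?thesis unfolding morrey_M_def
    using mult_left_mono[OF i, of "ennreal (r powr - lam)"]
    by (simp add: algebra_simps)
qed



definition bx :: "real \<Rightarrow> ('a \<Rightarrow> int) \<Rightarrow> real \<Rightarrow> 'a::euclidean_space" where
  "bx \<delta> z s = (\<Sum>i\<in>Basis. (\<delta> * (of_int (z i) + s)) *\<^sub>R i)"

lemma bx_inner: "j \<in> Basis \<Longrightarrow> bx \<delta> z s \<bullet> j = \<delta> * (of_int (z j) + s)"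
  unfolding bx_def by (simp add: inner_sum_left inner_Basis if_distrib if_distribR sum.delta cong: if_cong)

definition cube :: "real \<Rightarrow> ('a \<Rightarrow> int) \<Rightarrow> 'a::euclidean_space set" where
  "cube \<delta> z = cbox (bx \<delta> z 0) (bx \<delta> z 1)"

definition ocube :: "real \<Rightarrow> ('a \<Rightarrow> int) \<Rightarrow> 'a::euclidean_space set" where
  "ocube \<delta> z = box (bx \<delta> z 0) (bx \<delta> z 1)"

definition rbox :: "real \<Rightarrow> ('a \<Rightarrow> int) \<Rightarrow> 'a::euclidean_space set" where
  "rbox \<delta> z = box (bx \<delta> z (-1)) (bx \<delta> z 1)"

lemma mem_cube: "y \<in> cube \<delta> z \<longleftrightarrow> (\<forall>i\<in>Basis. \<delta> * of_int (z i) \<le> y \<bullet> i \<and> y \<bullet> i \<le> \<delta> * (of_int (z i) + 1))"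
  by (simp add: cube_def mem_box bx_inner)

lemma mem_ocube: "y \<in> ocube \<delta> z \<longleftrightarrow> (\<forall>i\<in>Basis. \<delta> * of_int (z i) < y \<bullet> i \<and> y \<bullet> i < \<delta> * (of_int (z i) + 1))"
  by (simp add: ocube_def mem_box bx_inner)

lemma mem_rbox: "y \<in> rbox \<delta> z \<longleftrightarrow> (\<forall>i\<in>Basis. \<delta> * (of_int (z i) - 1) < y \<bullet> i \<and> y \<bullet> i < \<delta> * (of_int (z i) + 1))"
  by (simp add: rbox_def mem_box bx_inner)

lemma ocube_sub: "ocube \<delta> z \<subseteq> cube \<delta> z"
  by (auto simp: mem_ocube mem_cube less_imp_le)

lemma cube_ne: "\<delta> > 0 \<Longrightarrow> cube \<delta> z \<noteq> {}"
  unfolding cube_def by (auto simp: box_ne_empty bx_inner)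

lemma meas_ocube: "\<delta> > 0 \<Longrightarrow> emeasure lebesgue (ocube \<delta> (z :: 'a \<Rightarrow> int)) = ennreal (\<delta> ^ DIM('a::euclidean_space))"
  unfolding ocube_def
  by (simp add: emeasure_lborel_box_eq bx_inner inner_diff_left prod_constant prod_ennreal algebra_simps)

lemma meas_rbox: "\<delta> > 0 \<Longrightarrow> emeasure lebesgue (rbox \<delta> (z :: 'a \<Rightarrow> int)) = ennreal ((2 * \<delta>) ^ DIM('a::euclidean_space))"
  unfolding rbox_def
  by (simp add: emeasure_lborel_box_eq bx_inner inner_diff_left prod_constant prod_ennreal algebra_simps)

definition cmin :: "('a::euclidean_space \<Rightarrow> real) \<Rightarrow> real \<Rightarrow> ('a \<Rightarrow> int) \<Rightarrow> 'a" where
  "cmin f \<delta> z = (SOME y. y \<in> cube \<delta> z \<and> (\<forall>w\<in>cube \<delta> z. \<bar>f y\<bar> \<le> \<bar>f w\<bar>))"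

definition acoef :: "('a::euclidean_space \<Rightarrow> real) \<Rightarrow> real \<Rightarrow> ('a \<Rightarrow> int) \<Rightarrow> real" where
  "acoef f \<delta> z = f (cmin f \<delta> z)"

lemma cmin_prop:
  assumes "continuous_on UNIV f" "\<delta> > 0"
  shows "cmin f \<delta> z \<in> cube \<delta> z \<and> (\<forall>w\<in>cube \<delta> z. \<bar>f (cmin f \<delta> z)\<bar> \<le> \<bar>f w\<bar>)"
proof -
  have "\<exists>y\<in>cube \<delta> z. \<forall>w\<in>cube \<delta> z. \<bar>f y\<bar> \<le> \<bar>f w\<bar>"
    by (rule continuous_attains_inf) (auto simp: cube_def cube_ne[OF assms(2), unfolded cube_def]
        intro!: continuous_intros continuous_on_subset[OF assms(1)])
  hence "\<exists>y. y \<in> cube \<delta> z \<and> (\<forall>w\<in>cube \<delta> z. \<bar>f y\<bar> \<le> \<bar>f w\<bar>)" by blast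
  thus ?thesis unfolding cmin_def by (rule someI_ex)
qed



lemma psi_near:
  fixes y :: "'a::euclidean_space"
  assumes "\<delta> > 0" "psi \<delta> z y \<noteq> 0" "w \<in> cube \<delta> z"
  shows "dist y w \<le> 2 * real DIM('a) * \<delta>"
proof -
  have "\<bar>(y - w) \<bullet> i\<bar> \<le> 2 * \<delta>" if i: "i \<in> Basis" for i
  proof -
    have a: "\<bar>y \<bullet> i / \<delta> - of_int (z i)\<bar> < 1" by (rule psi_supp[OF assms(2) i])
    have "\<bar>y \<bullet> i - \<delta> * of_int (z i)\<bar> < \<delta>"
    proof -
      have "\<bar>y \<bullet> i - \<delta> * of_int (z i)\<bar> = \<delta> * \<bar>y \<bullet> i / \<delta> - of_int (z i)\<bar>"
      proof -
        have "y \<bullet> i - \<delta> * of_int (z i) = \<delta> * (y \<bullet> i / \<delta> - of_int (z i))"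
          using assms(1) by (simp add: field_simps)
        thus ?thesis using assms(1) by (simp add: abs_mult)
      qed
      also have "\<dots> < \<delta> * 1" using a assms(1) by (intro mult_strict_left_mono) auto
      finally show ?thesis by simp
    qed
    moreover have "\<delta> * of_int (z i) \<le> w \<bullet> i" "w \<bullet> i \<le> \<delta> * (of_int (z i) + 1)"
      using assms(3) i by (auto simp: mem_cube)
    ultimately show ?thesis by (simp add: inner_diff_left algebra_simps abs_le_iff abs_less_iff)
  qed
  hence "(\<Sum>i\<in>Basis. \<bar>(y - w) \<bullet> i\<bar>) \<le> (\<Sum>i\<in>(Basis::'a set). 2 * \<delta>)"
    by (intro sum_mono) auto
  hence "norm (y - w) \<le> 2 * real DIM('a) * \<delta>"
    using norm_le_l1[of "y - w"] by simp
  thus ?thesis by (simp add: dist_norm)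
qed

lemma gfun_close:
  fixes f :: "'a::euclidean_space \<Rightarrow> real"
  assumes cont: "continuous_on UNIV f" and d: "\<delta> > 0"
    and uc: "\<And>u w. dist u w \<le> 2 * real DIM('a) * \<delta> \<Longrightarrow> \<bar>f u - f w\<bar> \<le> \<eta>"
  shows "\<bar>f y - gfun \<delta> (acoef f \<delta>) y\<bar> \<le> \<eta>"
proof -
  have near: "psi \<delta> z y * \<bar>f y - acoef f \<delta> z\<bar> \<le> psi \<delta> z y * \<eta>" for z
  proof (cases "psi \<delta> z y = 0")
    case True thus ?thesis by simp
  next
    case False
    have "dist y (cmin f \<delta> z) \<le> 2 * real DIM('a) * \<delta>"
      by (rule psi_near[OF d False]) (use cmin_prop[OF cont d] in blast)
    hence "\<bar>f y - acoef f \<delta> z\<bar> \<le> \<eta>" unfolding acoef_def by (rule uc)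
    thus ?thesis by (intro mult_left_mono psi_nonneg)
  qed
  have "f y - gfun \<delta> (acoef f \<delta>) y = (\<Sum>z\<in>Sx \<delta> y. psi \<delta> z y * (f y - acoef f \<delta> z))"
  proof -
    have "f y = (\<Sum>z\<in>Sx \<delta> y. psi \<delta> z y * f y)" by (simp add: sum_distrib_right[symmetric] psi_sum)
    hence "f y - gfun \<delta> (acoef f \<delta>) y = (\<Sum>z\<in>Sx \<delta> y. psi \<delta> z y * f y) - (\<Sum>z\<in>Sx \<delta> y. acoef f \<delta> z * psi \<delta> z y)"
      unfolding gfun_def by simp
    also have "\<dots> = (\<Sum>z\<in>Sx \<delta> y. psi \<delta> z y * (f y - acoef f \<delta> z))"
      by (simp add: sum_subtractf[symmetric] algebra_simps)
    finally show ?thesis .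
  qed
  hence "\<bar>f y - gfun \<delta> (acoef f \<delta>) y\<bar> \<le> (\<Sum>z\<in>Sx \<delta> y. \<bar>psi \<delta> z y * (f y - acoef f \<delta> z)\<bar>)"
    by (simp add: sum_abs)
  also have "\<dots> \<le> (\<Sum>z\<in>Sx \<delta> y. psi \<delta> z y * \<eta>)"
    by (intro sum_mono) (simp add: abs_mult psi_nonneg near)
  also have "\<dots> = \<eta>" by (simp add: sum_distrib_right[symmetric] psi_sum)
  finally show ?thesis .
qed



definition Fset :: "'a::euclidean_space \<Rightarrow> real \<Rightarrow> real \<Rightarrow> ('a \<Rightarrow> int) set" where
  "Fset x r \<delta> = PiE Basis (\<lambda>i. {\<lfloor>(x \<bullet> i - r) / \<delta>\<rfloor> - 1..\<lceil>(x \<bullet> i + r) / \<delta>\<rceil> + 1})"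

lemma finite_Fset: "finite (Fset x r \<delta>)"
  by (simp add: Fset_def finite_PiE)

lemma abs_div_lt1:
  fixes a b \<delta> :: real
  assumes "\<delta> > 0" "\<bar>a / \<delta> - b\<bar> < 1"
  shows "\<delta> * (b - 1) < a \<and> a < \<delta> * (b + 1)"
proof -
  have "b - 1 < a / \<delta>" "a / \<delta> < b + 1" using assms(2) by (auto simp: abs_less_iff)
  thus ?thesis using assms(1) by (simp add: field_simps)
qed

lemma gfun_pw:
  fixes y :: "'a::euclidean_space"
  assumes d: "\<delta> > 0" and y: "y \<in> ball x r" and p: "0 \<le> p"
  shows "ennreal (\<bar>gfun \<delta> a y\<bar> powr p) \<le> (\<Sum>z\<in>Fset x r \<delta>. ennreal (\<bar>a z\<bar> powr p) * indicator (rbox \<delta> z) y)"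
proof -
  define N where "N = {z\<in>Sx \<delta> y. psi \<delta> z y \<noteq> 0}"
  have fN: "finite N" unfolding N_def using finite_Sx[of \<delta> y] by simp
  have neN: "N \<noteq> {}"
  proof
    assume "N = {}"
    hence "\<forall>z\<in>Sx \<delta> y. psi \<delta> z y = 0" unfolding N_def by auto
    hence "(\<Sum>z\<in>Sx \<delta> y. psi \<delta> z y) = 0" by simp
    thus False by (simp add: psi_sum)
  qed
  define M where "M = Max ((\<lambda>z. \<bar>a z\<bar>) ` N)"
  have "M \<in> (\<lambda>z. \<bar>a z\<bar>) ` N" unfolding M_def using fN neN by (intro Max_in) auto
  then obtain z0 where z0: "z0 \<in> N" "\<bar>a z0\<bar> = M" by auto
  have Mge: "z \<in> N \<Longrightarrow> \<bar>a z\<bar> \<le> M" for z unfolding M_def using fN by (intro Max_ge) auto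
  have "\<bar>gfun \<delta> a y\<bar> \<le> (\<Sum>z\<in>Sx \<delta> y. \<bar>a z * psi \<delta> z y\<bar>)"
    unfolding gfun_def by (rule sum_abs)
  also have "\<dots> \<le> (\<Sum>z\<in>Sx \<delta> y. M * psi \<delta> z y)"
  proof (intro sum_mono)
    fix z assume z: "z \<in> Sx \<delta> y"
    show "\<bar>a z * psi \<delta> z y\<bar> \<le> M * psi \<delta> z y"
    proof (cases "psi \<delta> z y = 0")
      case True thus ?thesis by simp
    next
      case False hence "z \<in> N" using z unfolding N_def by auto
      thus ?thesis using Mge[of z] psi_nonneg[of \<delta> z y] by (simp add: abs_mult mult_right_mono)
    qed
  qed
  also have "\<dots> = M" by (simp add: sum_distrib_left[symmetric] psi_sum)
  finally have gle: "\<bar>gfun \<delta> a y\<bar> \<le> \<bar>a z0\<bar>" using z0 by simp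
  have z0S: "z0 \<in> Sx \<delta> y" and nz: "psi \<delta> z0 y \<noteq> 0" using z0 unfolding N_def by auto
  have yR: "y \<in> rbox \<delta> z0"
    unfolding mem_rbox using abs_div_lt1[OF d psi_supp[OF nz]] by auto
  have z0F: "z0 \<in> Fset x r \<delta>"
    unfolding Fset_def
  proof (rule PiE_I)
    fix i :: 'a assume i: "i \<in> Basis"
    have b: "\<delta> * (of_int (z0 i) - 1) < y \<bullet> i" "y \<bullet> i < \<delta> * (of_int (z0 i) + 1)"
      using abs_div_lt1[OF d psi_supp[OF nz i]] by auto
    have "\<bar>(y - x) \<bullet> i\<bar> < r" using Basis_le_norm[OF i, of "y - x"] y by (simp add: dist_norm norm_minus_commute)
    hence c: "x \<bullet> i - r < y \<bullet> i" "y \<bullet> i < x \<bullet> i + r" by (auto simp: inner_diff_left abs_less_iff)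
    have "(x \<bullet> i - r) / \<delta> < of_int (z0 i) + 1" using b c d by (simp add: field_simps)
    hence l: "\<lfloor>(x \<bullet> i - r) / \<delta>\<rfloor> - 1 \<le> z0 i" by linarith
    have "of_int (z0 i) - 1 < (x \<bullet> i + r) / \<delta>" using b c d by (simp add: field_simps)
    hence u: "z0 i \<le> \<lceil>(x \<bullet> i + r) / \<delta>\<rceil> + 1" by linarith
    show "z0 i \<in> {\<lfloor>(x \<bullet> i - r) / \<delta>\<rfloor> - 1..\<lceil>(x \<bullet> i + r) / \<delta>\<rceil> + 1}" using l u by simp
  next
    fix i :: 'a assume "i \<notin> Basis" thus "z0 i = undefined" using z0S unfolding Sx_def by (auto simp: PiE_def extensional_def)
  qed
  have "ennreal (\<bar>gfun \<delta> a y\<bar> powr p) \<le> ennreal (\<bar>a z0\<bar> powr p) * indicator (rbox \<delta> z0) y"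
    using yR gle p by (simp add: powr_mono2)
  also have "\<dots> \<le> (\<Sum>z\<in>Fset x r \<delta>. ennreal (\<bar>a z\<bar> powr p) * indicator (rbox \<delta> z) y)"
    by (rule member_le_sum[OF z0F _ finite_Fset]) simp
  finally show ?thesis .
qed

lemma ocube_disj:
  assumes "\<delta> > 0" "z \<in> PiE Basis (\<lambda>_. UNIV)" "z' \<in> PiE Basis (\<lambda>_. UNIV)"
    "w \<in> ocube \<delta> z" "w \<in> ocube \<delta> z'"
  shows "z = z'"
proof
  fix i
  show "z i = z' i"
  proof (cases "i \<in> Basis")
    case True
    have "z i = \<lfloor>w \<bullet> i / \<delta>\<rfloor>" if "w \<in> ocube \<delta> z" for z :: "'a \<Rightarrow> int"
    proof -
      have "\<delta> * of_int (z i) < w \<bullet> i" "w \<bullet> i < \<delta> * (of_int (z i) + 1)" using that True by (auto simp: mem_ocube)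
      hence "of_int (z i) < w \<bullet> i / \<delta>" "w \<bullet> i / \<delta> < of_int (z i) + 1" using assms(1) by (simp_all add: field_simps)
      thus ?thesis by (intro floor_unique[symmetric]) auto
    qed
    from this[OF assms(4)] this[OF assms(5)] show ?thesis by simp
  next
    case False thus ?thesis using assms(2,3) by (auto simp: PiE_def extensional_def)
  qed
qed

lemma ocube_ball:
  fixes x :: "'a::euclidean_space"
  assumes d: "\<delta> > 0" "\<delta> \<le> r" and z: "z \<in> Fset x r \<delta>" and w: "w \<in> ocube \<delta> z"
  shows "w \<in> ball x (5 * real DIM('a) * r)"
proof -
  have "\<bar>(w - x) \<bullet> i\<bar> \<le> 4 * r" if i: "i \<in> Basis" for i
  proof -
    have zi: "\<lfloor>(x \<bullet> i - r) / \<delta>\<rfloor> - 1 \<le> z i" "z i \<le> \<lceil>(x \<bullet> i + r) / \<delta>\<rceil> + 1"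
      using z i unfolding Fset_def by (auto simp: PiE_iff)
    have a: "(x \<bullet> i - r) / \<delta> - 2 < of_int (z i)" "of_int (z i) < (x \<bullet> i + r) / \<delta> + 2"
      using zi by linarith+
    have b: "x \<bullet> i - r - 2 * \<delta> < \<delta> * of_int (z i)" "\<delta> * of_int (z i) < x \<bullet> i + r + 2 * \<delta>"
      using a d(1) by (simp_all add: field_simps)
    have c: "\<delta> * of_int (z i) < w \<bullet> i" "w \<bullet> i < \<delta> * (of_int (z i) + 1)" using w i by (auto simp: mem_ocube)
    show ?thesis using b c d by (simp add: inner_diff_left abs_le_iff algebra_simps)
  qed
  hence "(\<Sum>i\<in>Basis. \<bar>(w - x) \<bullet> i\<bar>) \<le> (\<Sum>i\<in>(Basis::'a set). 4 * r)" by (intro sum_mono) auto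
  hence "norm (w - x) \<le> 4 * real DIM('a) * r" using norm_le_l1[of "w - x"] by simp
  moreover have "4 * real DIM('a) * r < 5 * real DIM('a) * r" using d by simp
  ultimately have "norm (w - x) < 5 * real DIM('a) * r" by linarith
  thus ?thesis by (simp add: dist_norm norm_minus_commute)
qed



lemma rbox_sets[measurable]: "rbox \<delta> (z::'a::euclidean_space \<Rightarrow> int) \<in> sets lebesgue"
  unfolding rbox_def by (intro sets_completionI_sets) (simp add: borel_open)

lemma ocube_sets[measurable]: "ocube \<delta> (z::'a::euclidean_space \<Rightarrow> int) \<in> sets lebesgue"
  unfolding ocube_def by (intro sets_completionI_sets) (simp add: borel_open)

lemma sum_ind_ocube:
  fixes x :: "'a::euclidean_space"
  assumes d: "\<delta> > 0" "\<delta> \<le> r"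
  shows "(\<Sum>z\<in>Fset x r \<delta>. c * indicator (ocube \<delta> z) w) \<le> (c::ennreal) * indicator (ball x (5 * real DIM('a) * r)) w"
proof (cases "\<exists>z0\<in>Fset x r \<delta>. w \<in> ocube \<delta> z0")
  case True
  then obtain z0 where z0: "z0 \<in> Fset x r \<delta>" "w \<in> ocube \<delta> z0" by blast
  have ext: "Fset x r \<delta> \<subseteq> PiE Basis (\<lambda>_. UNIV)" unfolding Fset_def by (rule PiE_mono) auto
  have "(\<Sum>z\<in>Fset x r \<delta>. c * indicator (ocube \<delta> z) w) = c * indicator (ocube \<delta> z0) w + (\<Sum>z\<in>Fset x r \<delta> - {z0}. c * indicator (ocube \<delta> z) w)"
    by (rule sum.remove[OF finite_Fset z0(1)])
  also have "(\<Sum>z\<in>Fset x r \<delta> - {z0}. c * indicator (ocube \<delta> z) w) = 0"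
  proof (intro sum.neutral ballI)
    fix z assume z: "z \<in> Fset x r \<delta> - {z0}"
    have "w \<notin> ocube \<delta> z"
    proof
      assume "w \<in> ocube \<delta> z"
      hence "z = z0" using ocube_disj[OF d(1), of z z0 w] z z0 ext by auto
      thus False using z by simp
    qed
    thus "c * indicator (ocube \<delta> z) w = 0" by simp
  qed
  also have "w \<in> ball x (5 * real DIM('a) * r)" by (rule ocube_ball[OF d z0])
  ultimately show ?thesis using z0 by simp
next
  case False
  hence "(\<Sum>z\<in>Fset x r \<delta>. c * indicator (ocube \<delta> z) w) = 0" by (intro sum.neutral) auto
  thus ?thesis by simp
qed

lemma gfun_int:
  fixes f :: "'a::euclidean_space \<Rightarrow> real"
  assumes cont: "continuous_on UNIV f" and fm: "f \<in> borel_measurable lebesgue"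
    and d: "\<delta> > 0" "\<delta> \<le> r" and p: "0 \<le> p"
  shows "(\<integral>\<^sup>+ y \<in> ball x r. ennreal (\<bar>gfun \<delta> (acoef f \<delta>) y\<bar> powr p) \<partial>lebesgue)
     \<le> ennreal (2 ^ DIM('a)) * (\<integral>\<^sup>+ y \<in> ball x (5 * real DIM('a) * r). ennreal (\<bar>f y\<bar> powr p) \<partial>lebesgue)"
proof -
  let ?a = "acoef f \<delta>" and ?F = "Fset x r \<delta>" and ?K = "5 * real DIM('a) * r"
  have "(\<integral>\<^sup>+ y \<in> ball x r. ennreal (\<bar>gfun \<delta> ?a y\<bar> powr p) \<partial>lebesgue)
     \<le> (\<integral>\<^sup>+ y. (\<Sum>z\<in>?F. ennreal (\<bar>?a z\<bar> powr p) * indicator (rbox \<delta> z) y) \<partial>lebesgue)"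
  proof (intro nn_integral_mono)
    fix y
    show "ennreal (\<bar>gfun \<delta> ?a y\<bar> powr p) * indicator (ball x r) y \<le> (\<Sum>z\<in>?F. ennreal (\<bar>?a z\<bar> powr p) * indicator (rbox \<delta> z) y)"
    proof (cases "y \<in> ball x r")
      case True thus ?thesis using gfun_pw[OF d(1) True p, of ?a] by simp
    next
      case False thus ?thesis by simp
    qed
  qed
  also have "\<dots> = (\<Sum>z\<in>?F. ennreal (\<bar>?a z\<bar> powr p) * emeasure lebesgue (rbox \<delta> z))"
  proof -
    have "(\<integral>\<^sup>+ y. (\<Sum>z\<in>?F. ennreal (\<bar>?a z\<bar> powr p) * indicator (rbox \<delta> z) y) \<partial>lebesgue)
        = (\<Sum>z\<in>?F. (\<integral>\<^sup>+ y. ennreal (\<bar>?a z\<bar> powr p) * indicator (rbox \<delta> z) y \<partial>lebesgue))"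
      by (rule nn_integral_sum) measurable
    also have "\<dots> = (\<Sum>z\<in>?F. ennreal (\<bar>?a z\<bar> powr p) * emeasure lebesgue (rbox \<delta> z))"
      by (intro sum.cong refl nn_integral_cmult_indicator rbox_sets)
    finally show ?thesis .
  qed
  also have "\<dots> \<le> (\<Sum>z\<in>?F. ennreal (2 ^ DIM('a)) * (\<integral>\<^sup>+ y. ennreal (\<bar>f y\<bar> powr p) * indicator (ocube \<delta> z) y \<partial>lebesgue))"
  proof (intro sum_mono)
    fix z
    have "ennreal (\<bar>?a z\<bar> powr p) * emeasure lebesgue (rbox \<delta> z) = ennreal (2 ^ DIM('a)) * (ennreal (\<bar>?a z\<bar> powr p) * emeasure lebesgue (ocube \<delta> z))"
      using d(1) by (simp only: meas_rbox[OF d(1)] meas_ocube[OF d(1)]) (simp add: power_mult_distrib ennreal_mult' mult_ac)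
    also have "ennreal (\<bar>?a z\<bar> powr p) * emeasure lebesgue (ocube \<delta> z) = (\<integral>\<^sup>+ y. ennreal (\<bar>?a z\<bar> powr p) * indicator (ocube \<delta> z) y \<partial>lebesgue)"
      by (rule nn_integral_cmult_indicator[symmetric]) (rule ocube_sets)
    also have "\<dots> \<le> (\<integral>\<^sup>+ y. ennreal (\<bar>f y\<bar> powr p) * indicator (ocube \<delta> z) y \<partial>lebesgue)"
    proof (intro nn_integral_mono)
      fix y
      show "ennreal (\<bar>?a z\<bar> powr p) * indicator (ocube \<delta> z) y \<le> ennreal (\<bar>f y\<bar> powr p) * indicator (ocube \<delta> z) y"
      proof (cases "y \<in> ocube \<delta> z")
        case True
        hence "\<bar>?a z\<bar> \<le> \<bar>f y\<bar>" using cmin_prop[OF cont d(1), of z] ocube_sub unfolding acoef_def by blast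
        thus ?thesis using True p by (simp add: powr_mono2)
      next
        case False thus ?thesis by simp
      qed
    qed
    finally show "ennreal (\<bar>?a z\<bar> powr p) * emeasure lebesgue (rbox \<delta> z) \<le> ennreal (2 ^ DIM('a)) * (\<integral>\<^sup>+ y. ennreal (\<bar>f y\<bar> powr p) * indicator (ocube \<delta> z) y \<partial>lebesgue)"
      by (simp add: mult_left_mono)
  qed
  also have "\<dots> = ennreal (2 ^ DIM('a)) * (\<integral>\<^sup>+ y. (\<Sum>z\<in>?F. ennreal (\<bar>f y\<bar> powr p) * indicator (ocube \<delta> z) y) \<partial>lebesgue)"
  proof -
    have "(\<integral>\<^sup>+ y. (\<Sum>z\<in>?F. ennreal (\<bar>f y\<bar> powr p) * indicator (ocube \<delta> z) y) \<partial>lebesgue)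
       = (\<Sum>z\<in>?F. (\<integral>\<^sup>+ y. ennreal (\<bar>f y\<bar> powr p) * indicator (ocube \<delta> z) y \<partial>lebesgue))"
      by (rule nn_integral_sum) (rule meas_pow[OF fm ocube_sets])
    thus ?thesis by (simp add: sum_distrib_left)
  qed
  also have "\<dots> \<le> ennreal (2 ^ DIM('a)) * (\<integral>\<^sup>+ y \<in> ball x ?K. ennreal (\<bar>f y\<bar> powr p) \<partial>lebesgue)"
    by (intro mult_left_mono nn_integral_mono sum_ind_ocube d) simp
  finally show ?thesis .
qed



lemma smooth_diff: "smooth g \<Longrightarrow> g differentiable (at x)"
  by (erule smooth.cases) auto

lemma smooth_meas:
  fixes g :: "'a::euclidean_space \<Rightarrow> real"
  assumes "smooth g"
  shows "g \<in> borel_measurable lebesgue"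
proof -
  have "continuous_on UNIV g"
    using smooth_diff[OF assms] by (intro differentiable_imp_continuous_on differentiable_at_imp_differentiable_on) auto
  hence "g \<in> borel_measurable borel" by (rule borel_measurable_continuous_onI)
  hence "g \<in> borel_measurable lborel" by simp
  thus ?thesis by (rule measurable_completion)
qed

lemma gfun_meas: "\<delta> > 0 \<Longrightarrow> gfun \<delta> a \<in> borel_measurable lebesgue"
  by (intro smooth_meas gfun_smooth)

lemma gfun_morrey:
  fixes f :: "'a::euclidean_space \<Rightarrow> real"
  assumes cont: "continuous_on UNIV f" and fm: "f \<in> borel_measurable lebesgue"
    and d: "\<delta> > 0" "\<delta> \<le> r" and p: "0 \<le> p"
  shows "morrey_M p lam (gfun \<delta> (acoef f \<delta>)) x r \<le>
     ennreal (2 ^ DIM('a) * (5 * real DIM('a)) powr lam) * morrey_M p lam f x (5 * real DIM('a) * r)"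
proof -
  define K where "K = 5 * real DIM('a)"
  have K: "K > 0" unfolding K_def by simp
  have r: "r > 0" using d by simp
  have e: "r powr (- lam) = K powr lam * (K * r) powr (- lam)"
    using K r by (simp add: powr_mult powr_minus field_simps)
  have "morrey_M p lam (gfun \<delta> (acoef f \<delta>)) x r \<le> ennreal (r powr (- lam)) *
     (ennreal (2 ^ DIM('a)) * (\<integral>\<^sup>+ y \<in> ball x (K * r). ennreal (\<bar>f y\<bar> powr p) \<partial>lebesgue))"
    unfolding morrey_M_def K_def using gfun_int[OF cont fm d p, of x] by (intro mult_left_mono) (auto simp: mult.assoc)
  also have "\<dots> = ennreal (2 ^ DIM('a) * K powr lam) * morrey_M p lam f x (K * r)"
    unfolding morrey_M_def e using K r
    by (simp add: ennreal_mult' ennreal_mult mult_ac)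
  finally show ?thesis unfolding K_def .
qed

lemma fg_large:
  fixes f :: "'a::euclidean_space \<Rightarrow> real"
  assumes cont: "continuous_on UNIV f" and fm: "f \<in> borel_measurable lebesgue"
    and d: "\<delta> > 0" "\<delta> \<le> r" and p: "0 \<le> p"
  shows "morrey_M p lam (\<lambda>y. f y - gfun \<delta> (acoef f \<delta>) y) x r \<le>
     ennreal (2 powr p) * (morrey_M p lam f x r +
       ennreal (2 ^ DIM('a) * (5 * real DIM('a)) powr lam) * morrey_M p lam f x (5 * real DIM('a) * r))"
proof -
  have "morrey_M p lam (\<lambda>y. f y - gfun \<delta> (acoef f \<delta>) y) x r \<le>
     ennreal (2 powr p) * (morrey_M p lam f x r + morrey_M p lam (gfun \<delta> (acoef f \<delta>)) x r)"
    by (rule morrey_split) (auto intro: fm gfun_meas d p)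
  also have "\<dots> \<le> ennreal (2 powr p) * (morrey_M p lam f x r +
       ennreal (2 ^ DIM('a) * (5 * real DIM('a)) powr lam) * morrey_M p lam f x (5 * real DIM('a) * r))"
    by (intro mult_left_mono add_left_mono gfun_morrey[OF cont fm d p]) auto
  finally show ?thesis .
qed



theorem theorem5p2:
  fixes f :: "'a::euclidean_space \<Rightarrow> real" and p lam :: real
  assumes "0 \<le> lam" and "lam < real DIM('a)" and "1 \<le> p"
    and "f \<in> V0_morrey p lam \<inter> Vinf_morrey p lam"
    and "uniformly_continuous_on UNIV f"
  shows "\<forall>\<epsilon>>0. \<exists>g. g \<in> V0_morrey p lam \<inter> Vinf_morrey p lam \<and> smooth g \<and>
           morrey_norm p lam (\<lambda>x. f x - g x) < \<epsilon>"
proof (intro allI impI)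
  fix \<epsilon> :: real assume \<epsilon>: "\<epsilon> > 0"
  have lam0: "0 \<le> lam" and lamn: "lam < real DIM('a)" and p1: "1 \<le> p" using assms(1-3) .
  have p0: "0 \<le> p" and pp: "0 < p" using p1 by auto
  have cont: "continuous_on UNIV f" by (rule uniformly_continuous_imp_continuous[OF assms(5)])
  have fm: "f \<in> borel_measurable lebesgue" and fsup: "morrey_sup p lam f < \<infinity>"
    and A0: "((\<lambda>r. SUP x. morrey_M p lam f x r) \<longlongrightarrow> 0) (at_right 0)"
    and Ainf: "((\<lambda>r. SUP x. morrey_M p lam f x r) \<longlongrightarrow> 0) at_top"
    using assms(4) unfolding V0_morrey_def Vinf_morrey_def morrey_space_def Lp_loc_def by auto
  define n where "n = real DIM('a)"
  define K where "K = 5 * n"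
  define A where "A = (\<lambda>r. SUP x. morrey_M p lam f x r)"
  define e0 where "e0 = \<epsilon> powr p / 2"
  define c2 where "c2 = 2 ^ DIM('a) * K powr lam"
  define cst where "cst = 2 powr p * (1 + c2)"
  define e1 where "e1 = e0 / cst"
  have n1: "n \<ge> 1" unfolding n_def by (simp add: DIM_positive Suc_le_eq)
  have K1: "K \<ge> 1" unfolding K_def using n1 by simp
  have e0: "e0 > 0" unfolding e0_def using \<epsilon> by simp
  have c2: "c2 \<ge> 0" unfolding c2_def by simp
  have cst: "cst > 0" unfolding cst_def using c2 by simp
  have e1: "e1 > 0" unfolding e1_def using e0 cst by simp
  have Mf_A: "morrey_M p lam f x r \<le> A r" for x r unfolding A_def by (rule SUP_upper) simp
  have "eventually (\<lambda>r. A r < ennreal e1) at_top"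
    using Ainf e1 unfolding A_def by (intro order_tendstoD(2)) auto
  then obtain R0 where R0: "\<And>r. r \<ge> R0 \<Longrightarrow> A r < ennreal e1" by (auto simp: eventually_at_top_linorder)
  define R where "R = max R0 1"
  have R: "R \<ge> 1" "R \<ge> R0" unfolding R_def by auto
  define V where "V = emeasure lebesgue (ball (0::'a) 1)"
  define v where "v = enn2real V"
  have Vfin: "V < top" using unit_ball_finite[where 'a='a] unfolding V_def by simp
  have Vv: "V = ennreal v" unfolding v_def using Vfin by simp
  have v0: "v \<ge> 0" unfolding v_def by simp
  define \<eta> where "\<eta> = (e0 / (R powr (n - lam) * (v + 1))) powr (1 / p)"
  have Rpos: "R powr (n - lam) > 0" using R by simp
  have eta: "\<eta> > 0" unfolding \<eta>_def using e0 Rpos v0 by simp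
  have etap: "\<eta> powr p = e0 / (R powr (n - lam) * (v + 1))"
    unfolding \<eta>_def using e0 Rpos v0 pp by (simp add: powr_powr)
  obtain d where d: "d > 0" "\<And>x x'. dist x' x < d \<Longrightarrow> dist (f x') (f x) < \<eta>"
    using assms(5) eta unfolding uniformly_continuous_on_def by blast
  define \<delta> where "\<delta> = min R (d / (4 * n))"
  have dpos: "\<delta> > 0" unfolding \<delta>_def using R d n1 by simp
  have dR: "\<delta> \<le> R" unfolding \<delta>_def by simp
  have dd: "2 * n * \<delta> < d"
  proof -
    have "2 * n * \<delta> \<le> 2 * n * (d / (4 * n))" unfolding \<delta>_def using n1 by (intro mult_left_mono) auto
    also have "\<dots> = d / 2" using n1 by simp
    finally show ?thesis using d by simp
  qed
  define g where "g = gfun \<delta> (acoef f \<delta>)"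
  have close: "\<bar>f y - g y\<bar> \<le> \<eta>" for y
    unfolding g_def
  proof (rule gfun_close[OF cont dpos])
    fix u w :: 'a assume "dist u w \<le> 2 * real DIM('a) * \<delta>"
    hence "dist u w < d" using dd unfolding n_def by simp
    hence "dist (f u) (f w) < \<eta>" using d(2)[of u w] d(2)[of w u] by (simp add: dist_commute)
    thus "\<bar>f u - f w\<bar> \<le> \<eta>" by (simp add: dist_real_def)
  qed
  have sm: "smooth g" unfolding g_def by (rule gfun_smooth[OF dpos])
  have gm: "g \<in> borel_measurable lebesgue" unfolding g_def by (rule gfun_meas[OF dpos])
  have fgm: "(\<lambda>y. f y - g y) \<in> borel_measurable lebesgue" using fm gm by measurable
  have small: "morrey_M p lam (\<lambda>y. f y - g y) x r \<le> ennreal (r powr (-lam) * \<eta> powr p * r ^ DIM('a)) * V" for x r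
    unfolding V_def by (rule morrey_bounded[OF close p0])
  have large: "morrey_M p lam (\<lambda>y. f y - g y) x r \<le> ennreal (2 powr p) * (A r + ennreal c2 * A (K * r))"
    if "\<delta> \<le> r" for x r
  proof -
    have "morrey_M p lam (\<lambda>y. f y - g y) x r \<le> ennreal (2 powr p) * (morrey_M p lam f x r +
       ennreal c2 * morrey_M p lam f x (K * r))"
      unfolding g_def c2_def K_def n_def by (rule fg_large[OF cont fm dpos that p0])
    also have "\<dots> \<le> ennreal (2 powr p) * (A r + ennreal c2 * A (K * r))"
      by (intro mult_left_mono add_mono Mf_A) auto
    finally show ?thesis .
  qed
  have main: "morrey_M p lam (\<lambda>y. f y - g y) x r \<le> ennreal e0" if r: "r > 0" for x r
  proof (cases "r \<le> R")
    case True
    have "r powr (-lam) * \<eta> powr p * r ^ DIM('a) = \<eta> powr p * r powr (n - lam)"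
      using r by (simp add: n_def powr_realpow[symmetric] powr_add[symmetric] powr_diff field_simps)
    also have "\<dots> \<le> \<eta> powr p * R powr (n - lam)"
      using True r lamn unfolding n_def by (intro mult_left_mono powr_mono2) auto
    finally have le1: "r powr (-lam) * \<eta> powr p * r ^ DIM('a) \<le> \<eta> powr p * R powr (n - lam)" .
    have "morrey_M p lam (\<lambda>y. f y - g y) x r \<le> ennreal (\<eta> powr p * R powr (n - lam)) * ennreal v"
    proof -
      have "ennreal (r powr (-lam) * \<eta> powr p * r ^ DIM('a)) * V \<le> ennreal (\<eta> powr p * R powr (n - lam)) * V"
        by (intro mult_right_mono ennreal_leI le1) simp
      from order_trans[OF small[of x r] this] show ?thesis unfolding Vv .
    qed
    also have "\<dots> = ennreal (\<eta> powr p * R powr (n - lam) * v)" using v0 by (simp add: ennreal_mult)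
    also have "\<eta> powr p * R powr (n - lam) * v = e0 * (v / (v + 1))"
    proof -
      define Rp where "Rp = R powr (n - lam)"
      have "Rp > 0" "v + 1 > 0" using Rpos v0 unfolding Rp_def by auto
      hence "e0 / (Rp * (v + 1)) * Rp * v = (e0 * v) * Rp / ((v + 1) * Rp)" by (simp add: mult_ac)
      also have "\<dots> = e0 * (v / (v + 1))" using \<open>Rp > 0\<close> by simp
      finally have "e0 / (Rp * (v + 1)) * Rp * v = e0 * (v / (v + 1))" .
      thus ?thesis unfolding etap Rp_def .
    qed
    also have "\<dots> \<le> e0"
    proof -
      have "v / (v + 1) \<le> 1" using v0 by simp
      from mult_left_mono[OF this, of e0] show ?thesis using e0 by simp
    qed
    finally show ?thesis by (meson ennreal_leI)
  next
    case False
    hence rR: "r \<ge> R0" "K * r \<ge> R0" using R K1 r by (auto intro: order_trans[OF _ mult_right_mono[of 1 K r]])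
    have "morrey_M p lam (\<lambda>y. f y - g y) x r \<le> ennreal (2 powr p) * (A r + ennreal c2 * A (K * r))"
      using False dR by (intro large) auto
    also have "\<dots> \<le> ennreal (2 powr p) * (ennreal e1 + ennreal c2 * ennreal e1)"
      using R0[OF rR(1)] R0[OF rR(2)] by (intro mult_left_mono add_mono) auto
    also have "\<dots> = ennreal e0"
    proof -
      have "2 powr p * (e1 + c2 * e1) = cst * e1" unfolding cst_def by (simp add: algebra_simps)
      also have "cst * e1 = e0" unfolding e1_def using cst by simp
      finally have r: "2 powr p * (e1 + c2 * e1) = e0" .
      have "ennreal (2 powr p) * (ennreal e1 + ennreal c2 * ennreal e1) = ennreal (2 powr p * (e1 + c2 * e1))"
        using e1 c2 by (simp add: ennreal_mult ennreal_plus)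
      thus ?thesis using r by simp
    qed
    finally show ?thesis .
  qed
  have supfg: "morrey_sup p lam (\<lambda>y. f y - g y) \<le> ennreal e0"
    unfolding morrey_sup_def by (rule SUP_least) (auto intro: main)
  have normfg: "morrey_norm p lam (\<lambda>x. f x - g x) < \<epsilon>"
  proof -
    have "enn2real (morrey_sup p lam (\<lambda>y. f y - g y)) \<le> e0"
      using enn2real_mono[OF supfg] e0 by simp
    hence "enn2real (morrey_sup p lam (\<lambda>y. f y - g y)) powr (1 / p) \<le> e0 powr (1 / p)"
      using pp by (intro powr_mono2) auto
    also have "e0 powr (1 / p) < (\<epsilon> powr p) powr (1 / p)"
      using e0 \<epsilon> pp unfolding e0_def by (intro powr_less_mono2) auto
    also have "(\<epsilon> powr p) powr (1 / p) = \<epsilon>" using \<epsilon> pp by (simp add: powr_powr)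
    finally show ?thesis unfolding morrey_norm_def .
  qed
  have gbound: "morrey_M p lam g x r \<le> ennreal (2 powr p) * (morrey_M p lam f x r + morrey_M p lam (\<lambda>y. f y - g y) x r)" for x r
    by (rule morrey_split[OF _ p0 fm fgm]) linarith
  have fsupM: "morrey_M p lam f x r \<le> morrey_sup p lam f" if "r > 0" for x r
    unfolding morrey_sup_def using that by (intro SUP_upper2[where i="(x, r)"]) auto
  have gM: "morrey_M p lam g x r \<le> ennreal (2 powr p) * (morrey_sup p lam f + ennreal e0)" if "r > 0" for x r
    using gbound[of x r] fsupM[OF that, of x] main[OF that, of x]
    by (meson add_mono mult_left_mono order_trans zero_le)
  have gsup: "morrey_sup p lam g < \<infinity>"
  proof -
    have "morrey_sup p lam g \<le> ennreal (2 powr p) * (morrey_sup p lam f + ennreal e0)"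
      unfolding morrey_sup_def[of p lam g] by (rule SUP_least) (auto intro: gM)
    also have "\<dots> < \<infinity>" using fsup by (simp add: ennreal_mult_less_top)
    finally show ?thesis .
  qed
  have gLp: "g \<in> Lp_loc p"
    unfolding Lp_loc_def
  proof (intro CollectI conjI allI impI gm)
    fix C :: "'a set" assume "compact C"
    then obtain \<rho> where \<rho>: "\<rho> > 0" "C \<subseteq> ball 0 \<rho>" using bounded_subset_ballD compact_imp_bounded by blast
    have "(\<integral>\<^sup>+ y \<in> C. ennreal (\<bar>g y\<bar> powr p) \<partial>lebesgue) \<le> (\<integral>\<^sup>+ y \<in> ball 0 \<rho>. ennreal (\<bar>g y\<bar> powr p) \<partial>lebesgue)"
      using \<rho>(2) by (intro nn_integral_mono) (auto split: split_indicator)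
    also have "\<dots> = ennreal (\<rho> powr lam) * morrey_M p lam g 0 \<rho>"
      unfolding morrey_M_def using \<rho>(1)
      by (simp add: mult.assoc[symmetric] ennreal_mult[symmetric] powr_minus)
    also have "\<dots> \<le> ennreal (\<rho> powr lam) * morrey_sup p lam g"
      unfolding morrey_sup_def using \<rho>(1) by (intro mult_left_mono SUP_upper2[where i="(0, \<rho>)"]) auto
    also have "\<dots> < \<infinity>" using gsup by (simp add: ennreal_mult_less_top)
    finally show "(\<integral>\<^sup>+ y \<in> C. ennreal (\<bar>g y\<bar> powr p) \<partial>lebesgue) < \<infinity>" .
  qed
  have gmor: "g \<in> morrey_space p lam" unfolding morrey_space_def using gLp gsup by simp
  have V0g: "((\<lambda>r. SUP x. morrey_M p lam g x r) \<longlongrightarrow> 0) (at_right 0)"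
  proof (rule tendsto_sandwich[where f="\<lambda>_. 0"])
    show "\<forall>\<^sub>F r in at_right 0. 0 \<le> (SUP x. morrey_M p lam g x r)" by simp
    show "((\<lambda>_. 0::ennreal) \<longlongrightarrow> 0) (at_right 0)" by simp
    show "\<forall>\<^sub>F r in at_right 0. (SUP x. morrey_M p lam g x r) \<le> ennreal (2 powr p) * (A r + V * ennreal (\<eta> powr p * r powr (n - lam)))"
      using eventually_at_right_less[of "0::real"]
    proof eventually_elim
      case (elim r)
      show ?case
      proof (rule SUP_least)
        fix x
        have e: "r powr (-lam) * \<eta> powr p * r ^ DIM('a) = \<eta> powr p * r powr (n - lam)"
          using elim by (simp add: n_def powr_realpow[symmetric] powr_add[symmetric] powr_diff field_simps)
        have "morrey_M p lam g x r \<le> ennreal (2 powr p) * (morrey_M p lam f x r + morrey_M p lam (\<lambda>y. f y - g y) x r)"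
          by (rule gbound)
        also have "\<dots> \<le> ennreal (2 powr p) * (A r + V * ennreal (\<eta> powr p * r powr (n - lam)))"
          using small[of x r] Mf_A[of x r] unfolding e by (intro mult_left_mono add_mono) (auto simp: mult.commute)
        finally show "morrey_M p lam g x r \<le> ennreal (2 powr p) * (A r + V * ennreal (\<eta> powr p * r powr (n - lam)))" .
      qed
    qed
    have t1: "((\<lambda>r. r powr (n - lam)) \<longlongrightarrow> 0) (at_right (0::real))"
      using lamn unfolding n_def
      by (intro tendsto_zero_powrI tendsto_ident_at tendsto_const eventually_at_right_less[THEN eventually_mono]) auto
    have t2: "((\<lambda>r. V * ennreal (\<eta> powr p * r powr (n - lam))) \<longlongrightarrow> V * ennreal (\<eta> powr p * 0)) (at_right (0::real))"
      by (intro ennreal_tendsto_cmult Vfin tendsto_ennrealI tendsto_mult tendsto_const t1)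
    have "((\<lambda>r. ennreal (2 powr p) * (A r + V * ennreal (\<eta> powr p * r powr (n - lam)))) \<longlongrightarrow> ennreal (2 powr p) * (0 + V * ennreal (\<eta> powr p * 0))) (at_right 0)"
      by (intro ennreal_tendsto_cmult tendsto_add t2) (use A0 in \<open>auto simp: A_def\<close>)
    thus "((\<lambda>r. ennreal (2 powr p) * (A r + V * ennreal (\<eta> powr p * r powr (n - lam)))) \<longlongrightarrow> 0) (at_right 0)"
      by simp
  qed
  have Vinfg: "((\<lambda>r. SUP x. morrey_M p lam g x r) \<longlongrightarrow> 0) at_top"
  proof (rule tendsto_sandwich[where f="\<lambda>_. 0"])
    show "\<forall>\<^sub>F r in at_top. 0 \<le> (SUP x. morrey_M p lam g x r)" by simp
    show "((\<lambda>_. 0::ennreal) \<longlongrightarrow> 0) at_top" by simp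
    show "\<forall>\<^sub>F r in at_top. (SUP x. morrey_M p lam g x r) \<le> ennreal (2 powr p) * (A r + ennreal (2 powr p) * (A r + ennreal c2 * A (K * r)))"
      using eventually_ge_at_top[of \<delta>]
    proof eventually_elim
      case (elim r)
      show ?case
      proof (rule SUP_least)
        fix x
        have "morrey_M p lam g x r \<le> ennreal (2 powr p) * (morrey_M p lam f x r + morrey_M p lam (\<lambda>y. f y - g y) x r)"
          by (rule gbound)
        also have "\<dots> \<le> ennreal (2 powr p) * (A r + ennreal (2 powr p) * (A r + ennreal c2 * A (K * r)))"
          using large[OF elim, of x] Mf_A[of x r] by (intro mult_left_mono add_mono) auto
        finally show "morrey_M p lam g x r \<le> ennreal (2 powr p) * (A r + ennreal (2 powr p) * (A r + ennreal c2 * A (K * r)))" .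
      qed
    qed
    have AK: "((\<lambda>r. A (K * r)) \<longlongrightarrow> 0) at_top"
    proof (rule filterlim_compose[of A])
      show "(A \<longlongrightarrow> 0) at_top" using Ainf unfolding A_def .
      show "filterlim (\<lambda>r. K * r) at_top at_top"
        using K1 by (intro filterlim_tendsto_pos_mult_at_top[OF tendsto_const _ filterlim_ident]) auto
    qed
    have A': "(A \<longlongrightarrow> 0) at_top" using Ainf unfolding A_def .
    have "((\<lambda>r. ennreal (2 powr p) * (A r + ennreal (2 powr p) * (A r + ennreal c2 * A (K * r)))) \<longlongrightarrow>
        ennreal (2 powr p) * (0 + ennreal (2 powr p) * (0 + ennreal c2 * 0))) at_top"
      by (intro ennreal_tendsto_cmult tendsto_add A' AK) auto
    thus "((\<lambda>r. ennreal (2 powr p) * (A r + ennreal (2 powr p) * (A r + ennreal c2 * A (K * r)))) \<longlongrightarrow> 0) at_top"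
      by simp
  qed
  have "g \<in> V0_morrey p lam \<inter> Vinf_morrey p lam"
    unfolding V0_morrey_def Vinf_morrey_def using gmor V0g Vinfg by simp
  thus "\<exists>g. g \<in> V0_morrey p lam \<inter> Vinf_morrey p lam \<and> smooth g \<and> morrey_norm p lam (\<lambda>x. f x - g x) < \<epsilon>"
    using sm normfg by blast
qed

end
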